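(* Let $(\mathcal H,\mathcal A)$ and $(\mathcal H',\mathcal A')$ be hypergraph pairs (with vertices in a common vertex set) such that for any $\sigma\in\mathcal H$ and $\sigma'\in\mathcal H'$, either $\sigma\cap\sigma'=\emptyset$ or $\sigma\cap\sigma'\in\mathcal H\cap\mathcal H'$; and for any $\tau\in\mathcal A$ and $\tau'\in\mathcal A'$, either $\tau\cap\tau'=\emptyset$ or $\tau\cap\tau'\in\mathcal A\cap\mathcal A'$. Then there is a long exact sequence of relative embedded homology $$\cdots\to H_n(\mathcal H\cap\mathcal H',\mathcal A\cap\mathcal A')\to H_n(\mathcal H,\mathcal A)\oplus H_n(\mathcal H',\mathcal A')\to H_n(\mathcal H\cup\mathcal H',\mathcal A\cup\mathcal A')\to H_{n-1}(\mathcal H\cap\mathcal H',\mathcal A\cap\mathcal A')\to\cdots.$$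
   Context: A hypergraph is a finite set of nonempty finite subsets of a vertex set (hyperedges); an $n$-hyperedge has $n+1$ vertices. A hypergraph pair $(\mathcal H,\mathcal A)$ means $\mathcal A\subseteq\mathcal H$. Unions and intersections of hypergraphs are taken as sets of hyperedges. The associated simplicial complex is $\Delta\mathcal H=\{\sigma\ne\emptyset:\sigma\subseteq\tau\text{ for some }\tau\in\mathcal H\}$. Fix an abelian coefficient group $G$; chains are simplicial chains with coefficients in $G$ (all inside the chain complex of the full simplex on the vertex set), with boundary $\partial$; $G(\mathcal H)_n$ is the group of $G$-linear combinations of $n$-hyperedges of $\mathcal H$, and $\mathrm{Inf}_n(\mathcal H)=G(\mathcal H)_n\cap\partial_n^{-1}(G(\mathcal H)_{n-1})$. Relative embedded homology: $H_n(\mathcal H,\mathcal A)=H_n(\mathrm{Inf}_*(\mathcal H)/\mathrm{Inf}_*(\mathcal A))$. *)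

theory Defs
  imports "HOL-Algebra.Algebra"
begin

text \<open>Vertices carry a linear order (used to orient simplices). A chain of degree n is a
finitely supported function from simplices (finite nonempty vertex sets with n+1 elements)
to the coefficient group.\<close>

definition chain_deg :: "int \<Rightarrow> ('v set \<Rightarrow> 'g::zero) set" where
  "chain_deg n = {c. finite {\<sigma>. c \<sigma> \<noteq> 0} \<and>
      (\<forall>\<sigma>. c \<sigma> \<noteq> 0 \<longrightarrow> finite \<sigma> \<and> \<sigma> \<noteq> {} \<and> int (card \<sigma>) = n + 1)}"

text \<open>Simplicial boundary: the face of \<sigma> opposite to its i-th vertex (i = number of smaller
vertices) gets sign (-1)^i; faces are nonempty (non-augmented complex).\<close>

definition bd :: "('v::linorder set \<Rightarrow> 'g::ab_group_add) \<Rightarrow> 'v set \<Rightarrow> 'g" where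
  "bd c = (\<lambda>\<tau>. if \<tau> = {} then 0 else
      (\<Sum>\<sigma>\<in>{\<sigma>. c \<sigma> \<noteq> 0}. \<Sum>v\<in>\<sigma>.
          if \<sigma> - {v} = \<tau> then (if even (card {w\<in>\<sigma>. w < v}) then c \<sigma> else - c \<sigma>) else 0))"

definition GH :: "'v set set \<Rightarrow> int \<Rightarrow> ('v set \<Rightarrow> 'g::zero) set" where
  "GH H n = {c \<in> chain_deg n. \<forall>\<sigma>. c \<sigma> \<noteq> 0 \<longrightarrow> \<sigma> \<in> H}"

definition Infc :: "'v::linorder set set \<Rightarrow> int \<Rightarrow> ('v set \<Rightarrow> 'g::ab_group_add) set" where
  "Infc H n = {c \<in> GH H n. bd c \<in> GH H (n - 1)}"

definition Inf_grp :: "'v::linorder set set \<Rightarrow> int \<Rightarrow> ('v set \<Rightarrow> 'g::ab_group_add) monoid" where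
  "Inf_grp H n = \<lparr>carrier = Infc H n, monoid.mult = (\<lambda>a b. (\<lambda>\<sigma>. a \<sigma> + b \<sigma>)), one = (\<lambda>\<sigma>. 0)\<rparr>"

definition Qgrp :: "'v::linorder set set \<Rightarrow> 'v set set \<Rightarrow> int \<Rightarrow> ('v set \<Rightarrow> 'g::ab_group_add) set monoid" where
  "Qgrp H A n = Inf_grp H n Mod Infc A n"

definition qbd :: "'v::linorder set set \<Rightarrow> 'v set set \<Rightarrow> int \<Rightarrow> ('v set \<Rightarrow> 'g::ab_group_add) set
                   \<Rightarrow> ('v set \<Rightarrow> 'g) set" where
  "qbd H A n Y = Infc A (n - 1) #>\<^bsub>Inf_grp H (n - 1)\<^esub> bd (SOME c. c \<in> Y)"

definition Zrel :: "'v::linorder set set \<Rightarrow> 'v set set \<Rightarrow> int \<Rightarrow> ('v set \<Rightarrow> 'g::ab_group_add) set set" where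
  "Zrel H A n = kernel (Qgrp H A n) (Qgrp H A (n - 1)) (qbd H A n)"

definition Brel :: "'v::linorder set set \<Rightarrow> 'v set set \<Rightarrow> int \<Rightarrow> ('v set \<Rightarrow> 'g::ab_group_add) set set" where
  "Brel H A n = qbd H A (n + 1) ` carrier (Qgrp H A (n + 1))"

definition rel_hom :: "'v::linorder set set \<Rightarrow> 'v set set \<Rightarrow> int
                       \<Rightarrow> ('v set \<Rightarrow> 'g::ab_group_add) set set monoid" where
  "rel_hom H A n = ((Qgrp H A n)\<lparr>carrier := Zrel H A n\<rparr>) Mod Brel H A n"

definition hcls :: "'v::linorder set set \<Rightarrow> 'v set set \<Rightarrow> int \<Rightarrow> ('v set \<Rightarrow> 'g::ab_group_add)
                    \<Rightarrow> ('v set \<Rightarrow> 'g) set set" where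
  "hcls H A n c = Brel H A n #>\<^bsub>(Qgrp H A n)\<lparr>carrier := Zrel H A n\<rparr>\<^esub>
                     (Infc A n #>\<^bsub>Inf_grp H n\<^esub> c)"

text \<open>Map on homology induced by an inclusion of pairs into the pair (L,C):
a class is sent to the class of any representative chain.\<close>
definition ind_map :: "'v::linorder set set \<Rightarrow> 'v set set \<Rightarrow> int \<Rightarrow> ('v set \<Rightarrow> 'g::ab_group_add) set set
                       \<Rightarrow> ('v set \<Rightarrow> 'g) set set" where
  "ind_map L C n Y = hcls L C n (SOME c. c \<in> \<Union>Y)"

definition mv_alpha where
  "mv_alpha H A H' A' n = (\<lambda>Y. (ind_map H A n Y, ind_map H' A' n Y))"

definition mv_beta where
  "mv_beta H A H' A' n = (\<lambda>p. ind_map (H \<union> H') (A \<union> A') n (fst p)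
       \<otimes>\<^bsub>rel_hom (H \<union> H') (A \<union> A') n\<^esub>
     inv\<^bsub>rel_hom (H \<union> H') (A \<union> A') n\<^esub> (ind_map (H \<union> H') (A \<union> A') n (snd p)))"

definition hypergraph :: "'v set set \<Rightarrow> bool" where
  "hypergraph H \<longleftrightarrow> finite H \<and> (\<forall>\<sigma>\<in>H. finite \<sigma> \<and> \<sigma> \<noteq> {})"

end

theory Submission
  imports Defs "HOL-Library.Function_Algebras"
begin

definition sg :: "nat \<Rightarrow> 'g::ab_group_add \<Rightarrow> 'g" where
  "sg k x = (if even k then x else - x)"

lemma sg_0[simp]: "sg k 0 = 0" by (simp add: sg_def)
lemma sg_add: "sg k (x + y) = sg k x + sg k y" by (simp add: sg_def)
lemma sg_uminus: "sg k (- x) = - sg k x" by (simp add: sg_def)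
lemma sg_sg: "sg a (sg b x) = sg (a + b) x" by (simp add: sg_def)
lemma sg_Suc: "sg (Suc k) x = - sg k x" by (simp add: sg_def)

definition fin_chain :: "('v set \<Rightarrow> 'g::zero) \<Rightarrow> bool" where
  "fin_chain c \<longleftrightarrow> finite {\<sigma>. c \<sigma> \<noteq> 0} \<and> (\<forall>\<sigma>. c \<sigma> \<noteq> 0 \<longrightarrow> finite \<sigma>)"

lemma bd_unfold: "bd c \<tau> = (if \<tau> = {} then 0 else (\<Sum>\<sigma>\<in>{\<sigma>. c \<sigma> \<noteq> 0}. \<Sum>v\<in>\<sigma>.
    if \<sigma> - {v} = \<tau> then sg (card {w\<in>\<sigma>. w < v}) (c \<sigma>) else 0))"
  unfolding bd_def sg_def by simp

lemma bd_alt: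
  fixes c :: "'v::linorder set \<Rightarrow> 'g::ab_group_add"
  assumes fin: "finite {\<sigma>. c \<sigma> \<noteq> 0}" and sub: "\<And>\<sigma>. c \<sigma> \<noteq> 0 \<Longrightarrow> \<sigma> \<subseteq> V"
    and V: "finite V" and ne: "\<tau> \<noteq> {}"
  shows "bd c \<tau> = (\<Sum>v\<in>V - \<tau>. sg (card {w\<in>\<tau>. w < v}) (c (insert v \<tau>)))"
proof -
  let ?S = "{\<sigma>. c \<sigma> \<noteq> 0}"
  let ?g = "\<lambda>\<sigma> v. sg (card {w\<in>\<sigma>. w < v}) (c \<sigma>)"
  have step: "(\<Sum>v\<in>\<sigma>. if \<sigma> - {v} = \<tau> then ?g \<sigma> v else 0)
      = (\<Sum>v\<in>V - \<tau>. if \<sigma> = insert v \<tau> then ?g \<sigma> v else 0)" if "\<sigma> \<in> ?S" for \<sigma>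
  proof -
    have sV: "\<sigma> \<subseteq> V" using sub that by auto
    hence fs: "finite \<sigma>" using V finite_subset by blast
    have "(\<Sum>v\<in>\<sigma>. if \<sigma> - {v} = \<tau> then ?g \<sigma> v else 0) = (\<Sum>v\<in>{v\<in>\<sigma>. \<sigma> - {v} = \<tau>}. ?g \<sigma> v)"
      using fs by (rule sum.inter_filter[symmetric])
    also have "{v\<in>\<sigma>. \<sigma> - {v} = \<tau>} = {v\<in>V - \<tau>. \<sigma> = insert v \<tau>}" using sV by auto
    also have "(\<Sum>v\<in>{v\<in>V - \<tau>. \<sigma> = insert v \<tau>}. ?g \<sigma> v)
        = (\<Sum>v\<in>V - \<tau>. if \<sigma> = insert v \<tau> then ?g \<sigma> v else 0)"
      using V by (intro sum.inter_filter) auto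
    finally show ?thesis .
  qed
  have "bd c \<tau> = (\<Sum>\<sigma>\<in>?S. \<Sum>v\<in>\<sigma>. if \<sigma> - {v} = \<tau> then ?g \<sigma> v else 0)"
    using ne by (simp add: bd_unfold)
  also have "\<dots> = (\<Sum>\<sigma>\<in>?S. \<Sum>v\<in>V - \<tau>. if \<sigma> = insert v \<tau> then ?g \<sigma> v else 0)"
    by (rule sum.cong[OF refl]) (rule step)
  also have "\<dots> = (\<Sum>v\<in>V - \<tau>. \<Sum>\<sigma>\<in>?S. if \<sigma> = insert v \<tau> then ?g \<sigma> v else 0)"
    by (rule sum.swap)
  also have "\<dots> = (\<Sum>v\<in>V - \<tau>. sg (card {w\<in>\<tau>. w < v}) (c (insert v \<tau>)))"
  proof (rule sum.cong[OF refl])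
    fix v assume v: "v \<in> V - \<tau>"
    have cw: "{w\<in>insert v \<tau>. w < v} = {w\<in>\<tau>. w < v}" by auto
    have "(\<Sum>\<sigma>\<in>?S. if \<sigma> = insert v \<tau> then ?g \<sigma> v else 0) = (if insert v \<tau> \<in> ?S then ?g (insert v \<tau>) v else 0)"
      using fin by (simp add: sum.delta)
    then show "(\<Sum>\<sigma>\<in>?S. if \<sigma> = insert v \<tau> then ?g \<sigma> v else 0) = sg (card {w\<in>\<tau>. w < v}) (c (insert v \<tau>))"
      using cw by auto
  qed
  finally show ?thesis .
qed

lemma bd_supp:
  assumes "bd c \<tau> \<noteq> 0"
  shows "\<tau> \<noteq> {} \<and> (\<exists>\<sigma> v. c \<sigma> \<noteq> 0 \<and> v \<in> \<sigma> \<and> \<tau> = \<sigma> - {v})"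
proof (rule ccontr)
  assume "\<not> ?thesis"
  hence "\<tau> = {} \<or> (\<forall>\<sigma> v. c \<sigma> \<noteq> 0 \<longrightarrow> v \<in> \<sigma> \<longrightarrow> \<sigma> - {v} \<noteq> \<tau>)" by blast
  hence "bd c \<tau> = 0" unfolding bd_unfold by (auto intro!: sum.neutral)
  with assms show False by simp
qed

lemma fin_chain_bd:
  assumes "fin_chain c" shows "fin_chain (bd c)"
proof -
  have fs: "finite {\<sigma>. c \<sigma> \<noteq> 0}" and fe: "\<And>\<sigma>. c \<sigma> \<noteq> 0 \<Longrightarrow> finite \<sigma>"
    using assms by (auto simp: fin_chain_def)
  have "{\<tau>. bd c \<tau> \<noteq> 0} \<subseteq> (\<lambda>p. fst p - {snd p}) ` (SIGMA \<sigma>:{\<sigma>. c \<sigma> \<noteq> 0}. \<sigma>)"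
  proof
    fix \<tau> assume "\<tau> \<in> {\<tau>. bd c \<tau> \<noteq> 0}"
    then obtain \<sigma> v where s: "c \<sigma> \<noteq> 0" "v \<in> \<sigma>" "\<tau> = \<sigma> - {v}" using bd_supp by blast
    show "\<tau> \<in> (\<lambda>p. fst p - {snd p}) ` (SIGMA \<sigma>:{\<sigma>. c \<sigma> \<noteq> 0}. \<sigma>)"
      by (rule image_eqI[of _ _ "(\<sigma>, v)"]) (use s in auto)
  qed
  moreover have "finite (SIGMA \<sigma>:{\<sigma>. c \<sigma> \<noteq> 0}. \<sigma>)"
    using fs fe by (intro finite_SigmaI) auto
  ultimately have "finite {\<tau>. bd c \<tau> \<noteq> 0}" by (meson finite_surj)
  moreover have "finite \<tau>" if "bd c \<tau> \<noteq> 0" for \<tau>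
    using bd_supp[OF that] fe by auto
  ultimately show ?thesis by (simp add: fin_chain_def)
qed

lemma chain_deg_fin: "c \<in> chain_deg n \<Longrightarrow> fin_chain c"
  by (simp add: chain_deg_def fin_chain_def)

lemma chain_deg_bd:
  assumes "c \<in> chain_deg n" shows "bd c \<in> chain_deg (n - 1)"
proof -
  have "fin_chain (bd c)" using fin_chain_bd chain_deg_fin assms by blast
  moreover have "int (card \<tau>) = n - 1 + 1" if nz: "bd c \<tau> \<noteq> 0" for \<tau>
  proof -
    obtain \<sigma> v where s: "c \<sigma> \<noteq> 0" "v \<in> \<sigma>" "\<tau> = \<sigma> - {v}" using bd_supp[OF nz] by blast
    have f: "finite \<sigma>" "int (card \<sigma>) = n + 1" using assms s(1) by (auto simp: chain_deg_def)
    have "card \<sigma> > 0" using f s card_gt_0_iff by blast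
    hence "int (card \<tau>) = int (card \<sigma>) - 1" using s f by (simp add: card_Diff_singleton of_nat_diff)
    thus ?thesis using f by simp
  qed
  ultimately show ?thesis using bd_supp by (auto simp: chain_deg_def fin_chain_def)
qed

lemma fin_chain_Union: "fin_chain c \<Longrightarrow> finite (\<Union>{\<sigma>. c \<sigma> \<noteq> 0})"
  unfolding fin_chain_def by auto

lemma fin_chain_add: fixes c d :: "'v set \<Rightarrow> 'g::ab_group_add" shows "fin_chain c \<Longrightarrow> fin_chain d \<Longrightarrow> fin_chain (c + d)"
proof -
  assume a: "fin_chain c" "fin_chain d"
  have s: "{\<sigma>. (c + d) \<sigma> \<noteq> 0} \<subseteq> {\<sigma>. c \<sigma> \<noteq> 0} \<union> {\<sigma>. d \<sigma> \<noteq> 0}" by auto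
  have "finite {\<sigma>. (c + d) \<sigma> \<noteq> 0}" using a s unfolding fin_chain_def by (meson finite_Un finite_subset)
  moreover have "finite \<sigma>" if "(c + d) \<sigma> \<noteq> 0" for \<sigma>
    using a that unfolding fin_chain_def by (cases "c \<sigma> = 0") auto
  ultimately show ?thesis unfolding fin_chain_def by blast
qed

lemma fin_chain_uminus: fixes c :: "'v set \<Rightarrow> 'g::ab_group_add" shows "fin_chain c \<Longrightarrow> fin_chain (- c)"
proof -
  assume a: "fin_chain c"
  have "{\<sigma>. (- c) \<sigma> \<noteq> 0} = {\<sigma>. c \<sigma> \<noteq> 0}" by auto
  thus ?thesis using a unfolding fin_chain_def by auto
qed

lemma fin_chain_zero: "fin_chain (0 :: 'v set \<Rightarrow> 'g::ab_group_add)"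
  unfolding fin_chain_def by simp

lemma sg_sum: "sg k (sum f S) = (\<Sum>x\<in>S. sg k (f x))"
  by (simp add: sg_def sum_negf)

lemma bd_add:
  assumes c: "fin_chain c" and d: "fin_chain d" shows "bd (c + d) = bd c + bd d"
proof
  fix \<tau>
  show "bd (c + d) \<tau> = (bd c + bd d) \<tau>"
  proof (cases "\<tau> = {}")
    case True thus ?thesis by (simp add: bd_def)
  next
    case False
    define V where "V = \<Union>{\<sigma>. c \<sigma> \<noteq> 0} \<union> \<Union>{\<sigma>. d \<sigma> \<noteq> 0}"
    have fV: "finite V" using c d fin_chain_Union V_def by auto
    have cd: "fin_chain (c + d)" using c d fin_chain_add by blast
    have sV: "\<sigma> \<subseteq> V" if "(c + d) \<sigma> \<noteq> 0" for \<sigma>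
      using that by (cases "c \<sigma> = 0") (auto simp: V_def)
    have "bd (c + d) \<tau> = (\<Sum>v\<in>V - \<tau>. sg (card {w\<in>\<tau>. w < v}) ((c + d) (insert v \<tau>)))"
      using cd fV False sV by (intro bd_alt) (auto simp: fin_chain_def)
    also have "\<dots> = (\<Sum>v\<in>V - \<tau>. sg (card {w\<in>\<tau>. w < v}) (c (insert v \<tau>)))
                   + (\<Sum>v\<in>V - \<tau>. sg (card {w\<in>\<tau>. w < v}) (d (insert v \<tau>)))"
      by (simp add: sg_add sum.distrib)
    also have "(\<Sum>v\<in>V - \<tau>. sg (card {w\<in>\<tau>. w < v}) (c (insert v \<tau>))) = bd c \<tau>"
      using c fV False by (intro bd_alt[symmetric]) (auto simp: fin_chain_def V_def)
    also have "(\<Sum>v\<in>V - \<tau>. sg (card {w\<in>\<tau>. w < v}) (d (insert v \<tau>))) = bd d \<tau>"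
      using d fV False by (intro bd_alt[symmetric]) (auto simp: fin_chain_def V_def)
    finally have "bd (c + d) \<tau> = bd c \<tau> + bd d \<tau>" .
    thus ?thesis by (simp only: plus_fun_apply)
  qed
qed

lemma bd_uminus:
  assumes c: "fin_chain c" shows "bd (- c) = - bd c"
proof
  fix \<tau>
  show "bd (- c) \<tau> = (- bd c) \<tau>"
  proof (cases "\<tau> = {}")
    case True thus ?thesis by (simp add: bd_def)
  next
    case False
    define V where "V = \<Union>{\<sigma>. c \<sigma> \<noteq> 0}"
    have fV: "finite V" using c fin_chain_Union V_def by auto
    have "bd (- c) \<tau> = (\<Sum>v\<in>V - \<tau>. sg (card {w\<in>\<tau>. w < v}) ((- c) (insert v \<tau>)))"
      using fin_chain_uminus[OF c] fV False by (intro bd_alt) (auto simp: fin_chain_def V_def)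
    also have "\<dots> = - (\<Sum>v\<in>V - \<tau>. sg (card {w\<in>\<tau>. w < v}) (c (insert v \<tau>)))"
      by (simp add: sg_uminus sum_negf)
    also have "(\<Sum>v\<in>V - \<tau>. sg (card {w\<in>\<tau>. w < v}) (c (insert v \<tau>))) = bd c \<tau>"
      using c fV False by (intro bd_alt[symmetric]) (auto simp: fin_chain_def V_def)
    finally have "bd (- c) \<tau> = - bd c \<tau>" .
    thus ?thesis by (simp only: uminus_apply)
  qed
qed

lemma bd_zero[simp]: "bd 0 = 0"
  by (simp add: bd_def fun_eq_iff)

lemma bd_diff: "fin_chain c \<Longrightarrow> fin_chain d \<Longrightarrow> bd (c - d) = bd c - bd d"
  using bd_add[of c "- d"] bd_uminus[of d] fin_chain_uminus[of d] by simp

lemma bd_bd: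
  fixes c :: "'v::linorder set \<Rightarrow> 'g::ab_group_add"
  assumes c: "fin_chain c" shows "bd (bd c) = 0"
proof
  fix \<rho>
  define V where "V = \<Union>{\<sigma>. c \<sigma> \<noteq> 0}"
  show "bd (bd c) \<rho> = 0 \<rho>"
  proof (cases "\<rho> \<noteq> {} \<and> \<rho> \<subseteq> V")
    case False
    have "bd (bd c) \<rho> = 0"
    proof (rule ccontr)
      assume "bd (bd c) \<rho> \<noteq> 0"
      from bd_supp[OF this] obtain \<tau> u where t: "bd c \<tau> \<noteq> 0" "u \<in> \<tau>" "\<rho> = \<tau> - {u}" and "\<rho> \<noteq> {}" by blast
      from bd_supp[OF t(1)] obtain \<sigma> v where "c \<sigma> \<noteq> 0" "v\<in>\<sigma>" "\<tau> = \<sigma> - {v}" by blast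
      hence "\<rho> \<subseteq> V" using t by (auto simp: V_def)
      with False \<open>\<rho> \<noteq> {}\<close> show False by blast
    qed
    thus ?thesis by simp
  next
    case True
    hence ne: "\<rho> \<noteq> {}" and \<rho>V: "\<rho> \<subseteq> V" by auto
    have fV: "finite V" using fin_chain_Union[OF c] V_def by simp
    have f\<rho>: "finite \<rho>" using finite_subset[OF \<rho>V fV] .
    have subc: "\<And>\<sigma>. c \<sigma> \<noteq> 0 \<Longrightarrow> \<sigma> \<subseteq> V" by (auto simp: V_def)
    have fc: "finite {\<sigma>. c \<sigma> \<noteq> 0}" using c fin_chain_def by auto
    have subb: "\<tau> \<subseteq> V" if "bd c \<tau> \<noteq> 0" for \<tau>
    proof -
      from bd_supp[OF that] obtain \<sigma> v where "c \<sigma> \<noteq> 0" "v\<in>\<sigma>" "\<tau> = \<sigma> - {v}" by blast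
      thus ?thesis using subc by blast
    qed
    have fb: "finite {\<tau>. bd c \<tau> \<noteq> 0}" using fin_chain_bd[OF c] fin_chain_def by auto
    define k where "k \<tau> v = card {w\<in>\<tau>. w < v}" for \<tau> :: "'v set" and v
    define F where "F p = sg (k \<rho> (fst p) + k (insert (fst p) \<rho>) (snd p))
        (c (insert (snd p) (insert (fst p) \<rho>)))" for p
    define P where "P = (SIGMA u:V - \<rho>. V - insert u \<rho>)"
    have "bd (bd c) \<rho> = (\<Sum>u\<in>V - \<rho>. sg (k \<rho> u) (bd c (insert u \<rho>)))"
      unfolding k_def using fb subb fV ne by (intro bd_alt) auto
    also have "\<dots> = (\<Sum>u\<in>V - \<rho>. \<Sum>v\<in>V - insert u \<rho>. F (u, v))"
    proof (rule sum.cong[OF refl])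
      fix u assume "u \<in> V - \<rho>"
      have "bd c (insert u \<rho>) = (\<Sum>v\<in>V - insert u \<rho>. sg (k (insert u \<rho>) v) (c (insert v (insert u \<rho>))))"
        unfolding k_def using fc subc fV by (intro bd_alt) auto
      thus "sg (k \<rho> u) (bd c (insert u \<rho>)) = (\<Sum>v\<in>V - insert u \<rho>. F (u, v))"
        by (simp add: F_def sg_sum sg_sg)
    qed
    also have "\<dots> = (\<Sum>(u,v)\<in>P. F (u, v))"
      unfolding P_def using fV by (subst sum.Sigma) auto
    also have "\<dots> = sum F P" by simp
    also have "sum F P = 0"
    proof -
      define P1 where "P1 = {p\<in>P. fst p < snd p}"
      have fP: "finite P" unfolding P_def using fV by auto
      have PU: "P = P1 \<union> (prod.swap ` P1)"
      proof
        show "P \<subseteq> P1 \<union> prod.swap ` P1"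
        proof
          fix p assume p: "p \<in> P"
          obtain u v where uv: "p = (u, v)" by (cases p)
          show "p \<in> P1 \<union> prod.swap ` P1"
          proof (cases "u < v")
            case True thus ?thesis using p uv by (auto simp: P1_def)
          next
            case False
            hence "v < u" using p uv by (auto simp: P_def)
            hence "(v, u) \<in> P1" using p uv by (auto simp: P1_def P_def)
            thus ?thesis using uv by (auto intro: image_eqI[of _ _ "(v, u)"])
          qed
        qed
        show "P1 \<union> prod.swap ` P1 \<subseteq> P" by (auto simp: P1_def P_def)
      qed
      have disj: "P1 \<inter> prod.swap ` P1 = {}" by (auto simp: P1_def)
      have fP1: "finite P1" using fP by (simp add: P1_def)
      have "sum F P = sum F P1 + sum F (prod.swap ` P1)"
        unfolding PU using fP1 disj by (intro sum.union_disjoint) auto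
      also have "sum F (prod.swap ` P1) = sum (F \<circ> prod.swap) P1"
        by (rule sum.reindex) (auto simp: inj_on_def)
      also have "sum (F \<circ> prod.swap) P1 = sum (\<lambda>p. - F p) P1"
      proof (rule sum.cong[OF refl])
        fix p assume p: "p \<in> P1"
        obtain u v where uv: "p = (u, v)" by (cases p)
        have uv2: "u < v" "u \<notin> \<rho>" "v \<notin> \<rho>" using p uv by (auto simp: P1_def P_def)
        have e1: "{w\<in>insert u \<rho>. w < v} = insert u {w\<in>\<rho>. w < v}" using uv2 by auto
        have k1: "k (insert u \<rho>) v = Suc (k \<rho> v)"
          unfolding k_def e1 using uv2 f\<rho> by (subst card_insert_disjoint) auto
        have e2: "{w\<in>insert v \<rho>. w < u} = {w\<in>\<rho>. w < u}" using uv2 by auto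
        have k2: "k (insert v \<rho>) u = k \<rho> u" unfolding k_def e2 ..
        have ic: "insert u (insert v \<rho>) = insert v (insert u \<rho>)" by auto
        have "F (v, u) = sg (k \<rho> v + k \<rho> u) (c (insert v (insert u \<rho>)))"
          by (simp add: F_def k2 ic)
        moreover have "F (u, v) = - sg (k \<rho> v + k \<rho> u) (c (insert v (insert u \<rho>)))"
          by (simp add: F_def k1 sg_Suc[symmetric] add.commute)
        ultimately show "(F \<circ> prod.swap) p = - F p" using uv by simp
      qed
      finally show ?thesis by (simp add: sum_negf)
    qed
    finally show ?thesis by simp
  qed
qed


lemma chain_deg_zero: "(0 :: 'v set \<Rightarrow> 'g::ab_group_add) \<in> chain_deg n"
  by (simp add: chain_deg_def)

lemma chain_deg_add:
  fixes c d :: "'v set \<Rightarrow> 'g::ab_group_add"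
  assumes "c \<in> chain_deg n" "d \<in> chain_deg n" shows "c + d \<in> chain_deg n"
proof -
  have s: "{\<sigma>. (c + d) \<sigma> \<noteq> 0} \<subseteq> {\<sigma>. c \<sigma> \<noteq> 0} \<union> {\<sigma>. d \<sigma> \<noteq> 0}" by auto
  have f: "finite {\<sigma>. c \<sigma> \<noteq> 0}" "finite {\<sigma>. d \<sigma> \<noteq> 0}" using assms by (auto simp: chain_deg_def)
  have "finite {\<sigma>. (c + d) \<sigma> \<noteq> 0}" using finite_subset[OF s] f by blast
  moreover have "finite \<sigma> \<and> \<sigma> \<noteq> {} \<and> int (card \<sigma>) = n + 1" if "(c + d) \<sigma> \<noteq> 0" for \<sigma>
  proof -
    have "c \<sigma> \<noteq> 0 \<or> d \<sigma> \<noteq> 0" using that by auto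
    thus ?thesis using assms unfolding chain_deg_def by blast
  qed
  ultimately show ?thesis unfolding chain_deg_def by blast
qed

lemma chain_deg_uminus:
  fixes c :: "'v set \<Rightarrow> 'g::ab_group_add"
  assumes "c \<in> chain_deg n" shows "- c \<in> chain_deg n"
proof -
  have "{\<sigma>. (- c) \<sigma> \<noteq> 0} = {\<sigma>. c \<sigma> \<noteq> 0}" by auto
  thus ?thesis using assms unfolding chain_deg_def by auto
qed

lemma chain_deg_diff:
  fixes c d :: "'v set \<Rightarrow> 'g::ab_group_add"
  assumes "c \<in> chain_deg n" "d \<in> chain_deg n" shows "c - d \<in> chain_deg n"
  using chain_deg_add[OF assms(1) chain_deg_uminus[OF assms(2)]] by simp

lemma GH_zero: "(0 :: 'v set \<Rightarrow> 'g::ab_group_add) \<in> GH H n"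
  by (simp add: GH_def chain_deg_zero)

lemma GH_add:
  fixes c d :: "'v set \<Rightarrow> 'g::ab_group_add"
  assumes "c \<in> GH H n" "d \<in> GH H n" shows "c + d \<in> GH H n"
proof -
  have "\<sigma> \<in> H" if "(c + d) \<sigma> \<noteq> 0" for \<sigma>
  proof -
    have "c \<sigma> \<noteq> 0 \<or> d \<sigma> \<noteq> 0" using that by auto
    thus ?thesis using assms unfolding GH_def by blast
  qed
  thus ?thesis using assms chain_deg_add by (auto simp: GH_def)
qed

lemma GH_uminus:
  fixes c :: "'v set \<Rightarrow> 'g::ab_group_add"
  assumes "c \<in> GH H n" shows "- c \<in> GH H n"
proof -
  have "- c \<in> chain_deg n" using assms chain_deg_uminus unfolding GH_def by blast
  moreover have "\<forall>\<sigma>. (- c) \<sigma> \<noteq> 0 \<longrightarrow> \<sigma> \<in> H" using assms unfolding GH_def by simp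
  ultimately show ?thesis unfolding GH_def by blast
qed

lemma GH_diff:
  fixes c d :: "'v set \<Rightarrow> 'g::ab_group_add"
  assumes "c \<in> GH H n" "d \<in> GH H n" shows "c - d \<in> GH H n"
  using GH_add[OF assms(1) GH_uminus[OF assms(2)]] by (simp only: diff_conv_add_uminus)

lemma GH_mono: "H \<subseteq> L \<Longrightarrow> GH H n \<subseteq> GH L n"
  unfolding GH_def by blast

lemma GH_Int: "GH (H \<inter> L) n = GH H n \<inter> GH L n"
  unfolding GH_def by blast

lemma Infc_fin: "c \<in> Infc H n \<Longrightarrow> fin_chain c"
  unfolding Infc_def GH_def using chain_deg_fin by blast

lemma Infc_zero: "(0 :: 'v::linorder set \<Rightarrow> 'g::ab_group_add) \<in> Infc H n"
  unfolding Infc_def GH_def chain_deg_def by simp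

lemma Infc_add:
  fixes c d :: "'v::linorder set \<Rightarrow> 'g::ab_group_add"
  assumes "c \<in> Infc H n" "d \<in> Infc H n" shows "c + d \<in> Infc H n"
proof -
  have e: "bd (c + d) = bd c + bd d" using bd_add[OF Infc_fin[OF assms(1)] Infc_fin[OF assms(2)]] .
  have "c + d \<in> GH H n" using assms GH_add unfolding Infc_def by blast
  moreover have "bd (c + d) \<in> GH H (n - 1)" unfolding e using assms GH_add unfolding Infc_def by blast
  ultimately show ?thesis unfolding Infc_def by blast
qed

lemma Infc_uminus:
  fixes c :: "'v::linorder set \<Rightarrow> 'g::ab_group_add"
  assumes "c \<in> Infc H n" shows "- c \<in> Infc H n"
proof -
  have e: "bd (- c) = - bd c" using bd_uminus[OF Infc_fin[OF assms]] .
  have "- c \<in> GH H n" using assms GH_uminus unfolding Infc_def by blast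
  moreover have "bd (- c) \<in> GH H (n - 1)" unfolding e using assms GH_uminus unfolding Infc_def by blast
  ultimately show ?thesis unfolding Infc_def by blast
qed

lemma Infc_diff:
  fixes c d :: "'v::linorder set \<Rightarrow> 'g::ab_group_add"
  assumes "c \<in> Infc H n" "d \<in> Infc H n" shows "c - d \<in> Infc H n"
  using Infc_add[OF assms(1) Infc_uminus[OF assms(2)]] by (simp only: diff_conv_add_uminus)

lemma Infc_mono: "H \<subseteq> L \<Longrightarrow> Infc H n \<subseteq> Infc L n"
  unfolding Infc_def using GH_mono by blast

lemma Infc_Int: "Infc (H \<inter> L) n = Infc H n \<inter> Infc L n"
  unfolding Infc_def GH_Int by blast

lemma Infc_bd:
  fixes c :: "'v::linorder set \<Rightarrow> 'g::ab_group_add"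
  assumes "c \<in> Infc H n" shows "bd c \<in> Infc H (n - 1)"
proof -
  have "bd (bd c) = 0" using bd_bd[OF Infc_fin[OF assms]] .
  thus ?thesis using assms GH_zero unfolding Infc_def by simp
qed

lemma Infc_split:
  fixes c :: "'v::linorder set \<Rightarrow> 'g::ab_group_add"
  assumes cond: "\<forall>\<sigma>\<in>H. \<forall>\<sigma>'\<in>H'. \<sigma> \<inter> \<sigma>' = {} \<or> \<sigma> \<inter> \<sigma>' \<in> H \<inter> H'"
    and c: "c \<in> Infc (H \<union> H') n"
  shows "\<exists>x y. x \<in> Infc H n \<and> y \<in> Infc H' n \<and> c = x + y"
proof -
  define x where "x = (\<lambda>\<sigma>. if \<sigma> \<in> H then c \<sigma> else 0)"
  define y where "y = (\<lambda>\<sigma>. if \<sigma> \<in> H then 0 else c \<sigma>)"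
  have cxy: "c = x + y" by (auto simp: x_def y_def fun_eq_iff)
  have cc: "c \<in> chain_deg n" "\<And>\<sigma>. c \<sigma> \<noteq> 0 \<Longrightarrow> \<sigma> \<in> H \<union> H'" "bd c \<in> GH (H \<union> H') (n - 1)"
    using c by (auto simp: Infc_def GH_def)
  have xc: "x \<in> chain_deg n"
  proof -
    have "{\<sigma>. x \<sigma> \<noteq> 0} \<subseteq> {\<sigma>. c \<sigma> \<noteq> 0}" by (auto simp: x_def)
    thus ?thesis using cc(1) unfolding chain_deg_def by (auto simp: x_def intro: finite_subset)
  qed
  have yc: "y \<in> chain_deg n"
  proof -
    have "{\<sigma>. y \<sigma> \<noteq> 0} \<subseteq> {\<sigma>. c \<sigma> \<noteq> 0}" by (auto simp: y_def)
    thus ?thesis using cc(1) unfolding chain_deg_def by (auto simp: y_def intro: finite_subset)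
  qed
  have xs: "x \<sigma> \<noteq> 0 \<Longrightarrow> \<sigma> \<in> H" for \<sigma> by (auto simp: x_def split: if_splits)
  have ys: "y \<sigma> \<noteq> 0 \<Longrightarrow> \<sigma> \<in> H' \<and> \<sigma> \<notin> H" for \<sigma> using cc(2) by (auto simp: y_def split: if_splits)
  have bdc: "bd c \<tau> = bd x \<tau> + bd y \<tau>" for \<tau>
    using bd_add[OF chain_deg_fin[OF xc] chain_deg_fin[OF yc]] cxy by simp
  have bdcs: "bd c \<tau> \<noteq> 0 \<Longrightarrow> \<tau> \<in> H \<union> H'" for \<tau> using cc(3) by (auto simp: GH_def)
  have A: "\<tau> \<in> H" if nz: "bd x \<tau> \<noteq> 0" for \<tau>
  proof (rule ccontr)
    assume nH: "\<tau> \<notin> H"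
    from bd_supp[OF nz] obtain \<sigma> v where s: "x \<sigma> \<noteq> 0" "v \<in> \<sigma>" "\<tau> = \<sigma> - {v}" and ne: "\<tau> \<noteq> {}" by blast
    have sH: "\<sigma> \<in> H" using xs s by blast
    have sf: "finite \<sigma>" "int (card \<sigma>) = n + 1" using xc s(1) by (auto simp: chain_deg_def)
    have nH': "\<tau> \<notin> H'"
    proof
      assume "\<tau> \<in> H'"
      hence "\<sigma> \<inter> \<tau> = {} \<or> \<sigma> \<inter> \<tau> \<in> H \<inter> H'" using cond sH by blast
      moreover have "\<sigma> \<inter> \<tau> = \<tau>" using s by auto
      ultimately show False using ne nH by auto
    qed
    have "bd y \<tau> = 0"
    proof -
      have "\<forall>\<sigma>'. y \<sigma>' \<noteq> 0 \<longrightarrow> (\<forall>v'\<in>\<sigma>'. \<sigma>' - {v'} \<noteq> \<tau>)"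
      proof (intro allI impI ballI notI)
        fix \<sigma>' v' assume y': "y \<sigma>' \<noteq> 0" and v': "v' \<in> \<sigma>'" and eq: "\<sigma>' - {v'} = \<tau>"
        have s'H: "\<sigma>' \<in> H'" "\<sigma>' \<notin> H" using ys[OF y'] by auto
        have s'f: "finite \<sigma>'" "int (card \<sigma>') = n + 1" using yc y' by (auto simp: chain_deg_def)
        have "\<sigma> \<inter> \<sigma>' \<noteq> {}" using eq s ne by auto
        hence int: "\<sigma> \<inter> \<sigma>' \<in> H" using cond sH s'H by blast
        show False
        proof (cases "v \<in> \<sigma>'")
          case True
          hence "\<sigma> \<subseteq> \<sigma>'" using s eq by auto
          hence "\<sigma> = \<sigma>'" using card_subset_eq s'f sf by (metis of_nat_eq_iff)
          thus False using sH s'H by simp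
        next
          case False
          hence "\<sigma> \<inter> \<sigma>' = \<tau>" using s eq by auto
          thus False using int nH by simp
        qed
      qed
      thus ?thesis unfolding bd_unfold by (auto intro!: sum.neutral)
    qed
    moreover have "bd c \<tau> = 0" using bdcs nH nH' by auto
    ultimately show False using bdc[of \<tau>] nz by simp
  qed
  have B: "\<tau> \<in> H'" if nz: "bd y \<tau> \<noteq> 0" for \<tau>
  proof (rule ccontr)
    assume nH': "\<tau> \<notin> H'"
    from bd_supp[OF nz] obtain \<sigma>' v' where s: "y \<sigma>' \<noteq> 0" "v' \<in> \<sigma>'" "\<tau> = \<sigma>' - {v'}" and ne: "\<tau> \<noteq> {}" by blast
    have sH: "\<sigma>' \<in> H'" using ys s by blast
    have nH: "\<tau> \<notin> H"
    proof
      assume "\<tau> \<in> H"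
      hence "\<tau> \<inter> \<sigma>' = {} \<or> \<tau> \<inter> \<sigma>' \<in> H \<inter> H'" using cond sH by blast
      moreover have "\<tau> \<inter> \<sigma>' = \<tau>" using s by auto
      ultimately show False using ne nH' by auto
    qed
    have "bd c \<tau> = 0" using bdcs nH nH' by auto
    hence "bd x \<tau> \<noteq> 0" using bdc[of \<tau>] nz by (auto simp: add_eq_0_iff)
    thus False using A nH by blast
  qed
  have "x \<in> Infc H n"
    using xc xs A chain_deg_bd[OF xc] by (auto simp: Infc_def GH_def)
  moreover have "y \<in> Infc H' n"
    using yc ys B chain_deg_bd[OF yc] by (auto simp: Infc_def GH_def)
  ultimately show ?thesis using cxy by blast
qed


definition cst :: "('a::ab_group_add) set \<Rightarrow> 'a \<Rightarrow> 'a set" where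
  "cst J c = (\<lambda>j. j + c) ` J"

definition addsub :: "('a::ab_group_add) set \<Rightarrow> bool" where
  "addsub J \<longleftrightarrow> 0 \<in> J \<and> (\<forall>x\<in>J. \<forall>y\<in>J. x + y \<in> J) \<and> (\<forall>x\<in>J. - x \<in> J)"

lemma addsub_zero: "addsub J \<Longrightarrow> 0 \<in> J" by (simp add: addsub_def)
lemma addsub_add: "addsub J \<Longrightarrow> x \<in> J \<Longrightarrow> y \<in> J \<Longrightarrow> x + y \<in> J" by (simp add: addsub_def)
lemma addsub_uminus: "addsub J \<Longrightarrow> x \<in> J \<Longrightarrow> - x \<in> J" by (simp add: addsub_def)
lemma addsub_diff: "addsub J \<Longrightarrow> x \<in> J \<Longrightarrow> y \<in> J \<Longrightarrow> x - y \<in> J"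
  using addsub_add[of J x "- y"] addsub_uminus[of J y] by (simp only: diff_conv_add_uminus)

lemma cos_eq:
  assumes J: "addsub J" shows "cst J c = cst J d \<longleftrightarrow> c - d \<in> J"
proof
  assume e: "cst J c = cst J d"
  have "c \<in> cst J c" unfolding cst_def using addsub_zero[OF J] by (rule rev_image_eqI) simp
  hence "c \<in> cst J d" using e by simp
  then obtain j where "j \<in> J" "c = j + d" unfolding cst_def by blast
  thus "c - d \<in> J" by simp
next
  assume cd: "c - d \<in> J"
  show "cst J c = cst J d"
  proof
    show "cst J c \<subseteq> cst J d"
    proof
      fix x assume "x \<in> cst J c"
      then obtain j where j: "j \<in> J" "x = j + c" by (auto simp: cst_def)
      hence "x = (j + (c - d)) + d" by (simp add: algebra_simps)
      moreover have "j + (c - d) \<in> J" using addsub_add[OF J j(1) cd] .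
      ultimately show "x \<in> cst J d" unfolding cst_def by blast
    qed
    show "cst J d \<subseteq> cst J c"
    proof
      fix x assume "x \<in> cst J d"
      then obtain j where j: "j \<in> J" "x = j + d" by (auto simp: cst_def)
      hence "x = (j - (c - d)) + c" by (simp add: algebra_simps)
      moreover have "j - (c - d) \<in> J" using addsub_diff[OF J j(1) cd] .
      ultimately show "x \<in> cst J c" unfolding cst_def by blast
    qed
  qed
qed

lemma cos_mult:
  assumes J: "addsub J" shows "{h + k | h k. h \<in> cst J c \<and> k \<in> cst J d} = cst J (c + d)"
proof
  show "{h + k | h k. h \<in> cst J c \<and> k \<in> cst J d} \<subseteq> cst J (c + d)"
  proof
    fix x assume "x \<in> {h + k | h k. h \<in> cst J c \<and> k \<in> cst J d}"
    then obtain j j' where jj: "j \<in> J" "j' \<in> J" "x = (j + c) + (j' + d)" unfolding cst_def by auto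
    hence "x = (j + j') + (c + d)" by (simp add: algebra_simps)
    thus "x \<in> cst J (c + d)" using addsub_add[OF J jj(1,2)] unfolding cst_def by blast
  qed
  show "cst J (c + d) \<subseteq> {h + k | h k. h \<in> cst J c \<and> k \<in> cst J d}"
  proof
    fix x assume "x \<in> cst J (c + d)"
    then obtain j where j: "j \<in> J" "x = j + (c + d)" by (auto simp: cst_def)
    have "j + c \<in> cst J c" "0 + d \<in> cst J d" using j addsub_zero[OF J] by (auto simp: cst_def)
    moreover have "x = (j + c) + (0 + d)" using j by (simp add: algebra_simps)
    ultimately show "x \<in> {h + k | h k. h \<in> cst J c \<and> k \<in> cst J d}" by blast
  qed
qed

lemma cos_zero: "cst J 0 = J" by (simp add: cst_def)

lemma cos_self_iff: assumes J: "addsub J" shows "cst J c = J \<longleftrightarrow> c \<in> J"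
  using cos_eq[OF J, of c 0] by (simp add: cos_zero)

lemma Infc_addsub: "addsub (Infc A n :: ('v::linorder set \<Rightarrow> 'g::ab_group_add) set)"
  unfolding addsub_def using Infc_zero Infc_add Infc_uminus by blast

lemma Inf_grp_mult: "x \<otimes>\<^bsub>Inf_grp H n\<^esub> y = x + y"
  by (simp add: Inf_grp_def plus_fun_def)

lemma Inf_grp_carrier: "carrier (Inf_grp H n) = Infc H n"
  by (simp add: Inf_grp_def)

lemma Inf_grp_one: "\<one>\<^bsub>Inf_grp H n\<^esub> = 0"
  by (simp add: Inf_grp_def zero_fun_def)

lemma rcos_Inf: "J #>\<^bsub>Inf_grp H n\<^esub> c = cst J c"
  unfolding r_coset_def cst_def by (auto simp: Inf_grp_mult)

lemma smult_Inf: "set_mult (Inf_grp H n) P Q = {h + k | h k. h \<in> P \<and> k \<in> Q}"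
  unfolding set_mult_def by (auto simp: Inf_grp_mult)

lemma Qgrp_simps:
  "carrier (Qgrp H A n) = cst (Infc A n) ` Infc H n"
  "monoid.mult (Qgrp H A n) = (\<lambda>P Q. set_mult (Inf_grp H n) P Q)"
  "\<one>\<^bsub>Qgrp H A n\<^esub> = Infc A n"
  unfolding Qgrp_def FactGroup_def RCOSETS_def rcos_Inf by (auto simp: Inf_grp_def)

lemma qbd_cos:
  fixes c :: "'v::linorder set \<Rightarrow> 'g::ab_group_add"
  assumes c: "fin_chain c"
  shows "qbd H A n (cst (Infc A n) c) = cst (Infc A (n - 1)) (bd c)"
proof -
  let ?x = "SOME x. x \<in> cst (Infc A n) c"
  have "c \<in> cst (Infc A n) c" unfolding cst_def using Infc_zero by (rule rev_image_eqI) simp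
  hence "?x \<in> cst (Infc A n) c" using someI[of "\<lambda>x. x \<in> cst (Infc A n) c" c] by blast
  then obtain j where j: "j \<in> Infc A n" "?x = j + c" by (auto simp: cst_def)
  have "bd ?x = bd j + bd c" using j bd_add[OF Infc_fin[OF j(1)] c] by simp
  hence "bd ?x - bd c \<in> Infc A (n - 1)" using Infc_bd[OF j(1)] by simp
  hence "cst (Infc A (n - 1)) (bd ?x) = cst (Infc A (n - 1)) (bd c)"
    using cos_eq[OF Infc_addsub] by blast
  thus ?thesis unfolding qbd_def rcos_Inf .
qed

definition Zc :: "'v::linorder set set \<Rightarrow> 'v set set \<Rightarrow> int \<Rightarrow> ('v set \<Rightarrow> 'g::ab_group_add) set" where
  "Zc H A n = {c \<in> Infc H n. bd c \<in> Infc A (n - 1)}"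

definition Bc :: "'v::linorder set set \<Rightarrow> 'v set set \<Rightarrow> int \<Rightarrow> ('v set \<Rightarrow> 'g::ab_group_add) set" where
  "Bc H A n = {j + bd d | j d. j \<in> Infc A n \<and> d \<in> Infc H (n + 1)}"

lemma Zrel_eq: "Zrel H A n = cst (Infc A n) ` Zc H A n"
proof -
  have q: "qbd H A n (cst (Infc A n) c) = Infc A (n - 1) \<longleftrightarrow> bd c \<in> Infc A (n - 1)" if "c \<in> Infc H n" for c
    using qbd_cos[OF Infc_fin[OF that]] cos_self_iff[OF Infc_addsub] by simp
  show ?thesis unfolding Zrel_def kernel_def Qgrp_simps Zc_def using q by auto
qed

lemma Brel_eq: "Brel H A n = (\<lambda>d. cst (Infc A n) (bd d)) ` Infc H (n + 1)"
proof -
  have "qbd H A (n + 1) (cst (Infc A (n + 1)) d) = cst (Infc A n) (bd d)" if "d \<in> Infc H (n + 1)" for d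
    using qbd_cos[OF Infc_fin[OF that], of H A "n + 1"] by simp
  thus ?thesis unfolding Brel_def Qgrp_simps image_image by (auto intro: image_cong)
qed

lemma hcls_eq:
  fixes c :: "'v::linorder set \<Rightarrow> 'g::ab_group_add"
  shows "hcls H A n c = (\<lambda>d. cst (Infc A n) (bd d + c)) ` Infc H (n + 1)"
  unfolding hcls_def rcos_Inf unfolding r_coset_def Brel_eq
  by (auto simp: Qgrp_simps smult_Inf cos_mult[OF Infc_addsub])

lemma rel_hom_carrier: "carrier (rel_hom H A n) = hcls H A n ` Zc H A n"
  unfolding rel_hom_def FactGroup_def RCOSETS_def by (auto simp: Zrel_eq hcls_def rcos_Inf)

lemma rel_hom_one: "\<one>\<^bsub>rel_hom H A n\<^esub> = hcls H A n 0"
  unfolding rel_hom_def FactGroup_def by (simp add: Brel_eq hcls_eq)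


lemma Bc_addsub: "addsub (Bc H A n :: ('v::linorder set \<Rightarrow> 'g::ab_group_add) set)"
proof -
  let ?B = "Bc H A n :: ('v set \<Rightarrow> 'g) set"
  have "0 \<in> ?B" unfolding Bc_def using Infc_zero[of A n] Infc_zero[of H "n+1"] by force
  moreover have "x + y \<in> ?B" if xy: "x \<in> ?B" "y \<in> ?B" for x y
  proof -
    obtain j d where a: "j \<in> Infc A n" "d \<in> Infc H (n + 1)" "x = j + bd d" using xy(1) unfolding Bc_def by blast
    obtain j' d' where b: "j' \<in> Infc A n" "d' \<in> Infc H (n + 1)" "y = j' + bd d'" using xy(2) unfolding Bc_def by blast
    have "x + y = (j + j') + bd (d + d')"
      using a b bd_add[OF Infc_fin[OF a(2)] Infc_fin[OF b(2)]] by (simp add: algebra_simps)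
    thus ?thesis unfolding Bc_def using Infc_add[OF a(1) b(1)] Infc_add[OF a(2) b(2)] by blast
  qed
  moreover have "- x \<in> ?B" if xx: "x \<in> ?B" for x
  proof -
    obtain j d where a: "j \<in> Infc A n" "d \<in> Infc H (n + 1)" "x = j + bd d" using xx unfolding Bc_def by blast
    have "- x = (- j) + bd (- d)"
      using a bd_uminus[OF Infc_fin[OF a(2)]] by (simp add: algebra_simps)
    thus ?thesis unfolding Bc_def using Infc_uminus[OF a(1)] Infc_uminus[OF a(2)] by blast
  qed
  ultimately show ?thesis unfolding addsub_def by blast
qed

lemma Bc_J: "j \<in> Infc A n \<Longrightarrow> j \<in> Bc H A n"
  unfolding Bc_def using Infc_zero[of H "n+1"] by force

lemma Bc_bd: "d \<in> Infc H (n + 1) \<Longrightarrow> bd d \<in> Bc H A n"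
  unfolding Bc_def using Infc_zero[of A n] by force

lemma Bc_mono: "H \<subseteq> L \<Longrightarrow> A \<subseteq> C \<Longrightarrow> Bc H A n \<subseteq> Bc L C n"
  unfolding Bc_def using Infc_mono by blast

lemma hcls_eq_iff:
  fixes c c' :: "'v::linorder set \<Rightarrow> 'g::ab_group_add"
  shows "hcls H A n c = hcls H A n c' \<longleftrightarrow> c - c' \<in> Bc H A n"
proof
  let ?J = "Infc A n :: ('v set \<Rightarrow> 'g) set"
  assume e: "hcls H A n c = hcls H A n c'"
  have "cst ?J (bd 0 + c) \<in> hcls H A n c" unfolding hcls_eq using Infc_zero by blast
  hence "cst ?J c \<in> hcls H A n c'" using e by simp
  then obtain d where d: "d \<in> Infc H (n + 1)" "cst ?J c = cst ?J (bd d + c')" unfolding hcls_eq by blast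
  hence "c - (bd d + c') \<in> ?J" using cos_eq[OF Infc_addsub] by blast
  hence "c - (bd d + c') \<in> Bc H A n" by (rule Bc_J)
  moreover have "bd d \<in> Bc H A n" using d(1) by (rule Bc_bd)
  ultimately have "(c - (bd d + c')) + bd d \<in> Bc H A n" by (rule addsub_add[OF Bc_addsub])
  thus "c - c' \<in> Bc H A n" by (simp add: algebra_simps)
next
  let ?J = "Infc A n :: ('v set \<Rightarrow> 'g) set"
  assume "c - c' \<in> Bc H A n"
  then obtain j0 d0 where jd: "j0 \<in> ?J" "d0 \<in> Infc H (n + 1)" "c - c' = j0 + bd d0" unfolding Bc_def by blast
  show "hcls H A n c = hcls H A n c'"
  proof
    show "hcls H A n c \<subseteq> hcls H A n c'"
    proof
      fix P assume "P \<in> hcls H A n c"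
      then obtain d where d: "d \<in> Infc H (n + 1)" "P = cst ?J (bd d + c)" unfolding hcls_eq by blast
      have bdd: "bd (d + d0) = bd d + bd d0" using bd_add[OF Infc_fin[OF d(1)] Infc_fin[OF jd(2)]] .
      have "(bd d + c) - (bd (d + d0) + c') = j0" using jd(3) bdd by (simp add: algebra_simps)
      hence "P = cst ?J (bd (d + d0) + c')" using d(2) cos_eq[OF Infc_addsub] jd(1) by metis
      thus "P \<in> hcls H A n c'" unfolding hcls_eq using Infc_add[OF d(1) jd(2)] by blast
    qed
    show "hcls H A n c' \<subseteq> hcls H A n c"
    proof
      fix P assume "P \<in> hcls H A n c'"
      then obtain d where d: "d \<in> Infc H (n + 1)" "P = cst ?J (bd d + c')" unfolding hcls_eq by blast
      have bdd: "bd (d - d0) = bd d - bd d0" using bd_diff[OF Infc_fin[OF d(1)] Infc_fin[OF jd(2)]] .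
      have "(bd d + c') - (bd (d - d0) + c) = - j0" using jd(3) bdd by (simp add: algebra_simps)
      hence "P = cst ?J (bd (d - d0) + c)" using d(2) cos_eq[OF Infc_addsub] Infc_uminus[OF jd(1)] by metis
      thus "P \<in> hcls H A n c" unfolding hcls_eq using Infc_diff[OF d(1) jd(2)] by blast
    qed
  qed
qed

lemma hcls_Union:
  fixes c :: "'v::linorder set \<Rightarrow> 'g::ab_group_add"
  shows "x \<in> \<Union>(hcls H A n c) \<longleftrightarrow> x - c \<in> Bc H A n"
proof
  assume "x \<in> \<Union>(hcls H A n c)"
  then obtain d j where "d \<in> Infc H (n + 1)" "j \<in> Infc A n" "x = j + (bd d + c)"
    unfolding hcls_eq cst_def by blast
  thus "x - c \<in> Bc H A n" unfolding Bc_def by (force simp: algebra_simps)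
next
  assume "x - c \<in> Bc H A n"
  then obtain j d where "j \<in> Infc A n" "d \<in> Infc H (n + 1)" "x - c = j + bd d" unfolding Bc_def by blast
  hence "x \<in> cst (Infc A n) (bd d + c)" "cst (Infc A n) (bd d + c) \<in> hcls H A n c"
    unfolding hcls_eq cst_def by (auto simp: algebra_simps intro!: image_eqI[of _ _ j])
  thus "x \<in> \<Union>(hcls H A n c)" by blast
qed

lemma rel_hom_mult:
  fixes c c' :: "'v::linorder set \<Rightarrow> 'g::ab_group_add"
  shows "hcls H A n c \<otimes>\<^bsub>rel_hom H A n\<^esub> hcls H A n c' = hcls H A n (c + c')"
proof -
  let ?J = "Infc A n :: ('v set \<Rightarrow> 'g) set"
  have m: "P \<otimes>\<^bsub>rel_hom H A n\<^esub> Q = {set_mult (Inf_grp H n) h k | h k. h \<in> P \<and> k \<in> Q}" for P Q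
    unfolding rel_hom_def FactGroup_def set_mult_def[of "(Qgrp H A n)\<lparr>carrier := Zrel H A n\<rparr>"]
    by (auto simp: Qgrp_simps)
  have sm: "set_mult (Inf_grp H n) (cst ?J a) (cst ?J b) = cst ?J (a + b)" for a b
    unfolding smult_Inf using cos_mult[OF Infc_addsub] .
  show ?thesis
  proof
    show "hcls H A n c \<otimes>\<^bsub>rel_hom H A n\<^esub> hcls H A n c' \<subseteq> hcls H A n (c + c')"
    proof
      fix P assume "P \<in> hcls H A n c \<otimes>\<^bsub>rel_hom H A n\<^esub> hcls H A n c'"
      then obtain d d' where d: "d \<in> Infc H (n + 1)" "d' \<in> Infc H (n + 1)"
        "P = set_mult (Inf_grp H n) (cst ?J (bd d + c)) (cst ?J (bd d' + c'))"
        unfolding m hcls_eq by blast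
      have "P = cst ?J (bd (d + d') + (c + c'))"
        using d(3) sm bd_add[OF Infc_fin[OF d(1)] Infc_fin[OF d(2)]] by (simp add: algebra_simps)
      thus "P \<in> hcls H A n (c + c')" unfolding hcls_eq using Infc_add[OF d(1) d(2)] by blast
    qed
    show "hcls H A n (c + c') \<subseteq> hcls H A n c \<otimes>\<^bsub>rel_hom H A n\<^esub> hcls H A n c'"
    proof
      fix P assume "P \<in> hcls H A n (c + c')"
      then obtain d where d: "d \<in> Infc H (n + 1)" "P = cst ?J (bd d + (c + c'))" unfolding hcls_eq by blast
      have "P = set_mult (Inf_grp H n) (cst ?J (bd d + c)) (cst ?J (bd 0 + c'))"
        using d(2) sm by (simp add: algebra_simps)
      moreover have "cst ?J (bd d + c) \<in> hcls H A n c" "cst ?J (bd 0 + c') \<in> hcls H A n c'"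
        unfolding hcls_eq using d(1) Infc_zero by blast+
      ultimately show "P \<in> hcls H A n c \<otimes>\<^bsub>rel_hom H A n\<^esub> hcls H A n c'" unfolding m by blast
    qed
  qed
qed

lemma ind_map_hcls:
  fixes c :: "'v::linorder set \<Rightarrow> 'g::ab_group_add"
  assumes "Bc H A n \<subseteq> (Bc L C n :: ('v set \<Rightarrow> 'g) set)"
  shows "ind_map L C n (hcls H A n c) = hcls L C n c"
proof -
  let ?x = "SOME x. x \<in> \<Union>(hcls H A n c)"
  have "c \<in> \<Union>(hcls H A n c)" using hcls_Union[of c H A n c] addsub_zero[OF Bc_addsub[of H A n]] by simp
  hence "?x \<in> \<Union>(hcls H A n c)" using someI[of "\<lambda>x. x \<in> \<Union>(hcls H A n c)" c] by blast
  hence "?x - c \<in> Bc H A n" using hcls_Union[of ?x H A n c] by blast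
  hence "?x - c \<in> Bc L C n" using assms by blast
  thus ?thesis unfolding ind_map_def using hcls_eq_iff[of L C n ?x c] by blast
qed

lemma Zc_add:
  fixes c d :: "'v::linorder set \<Rightarrow> 'g::ab_group_add"
  assumes "c \<in> Zc H A n" "d \<in> Zc H A n" shows "c + d \<in> Zc H A n"
  using assms Infc_add[of c H n d] Infc_add[of "bd c" A "n - 1" "bd d"] bd_add[of c d] Infc_fin[of c H n] Infc_fin[of d H n]
  unfolding Zc_def by auto

lemma Zc_uminus:
  fixes c :: "'v::linorder set \<Rightarrow> 'g::ab_group_add"
  assumes "c \<in> Zc H A n" shows "- c \<in> Zc H A n"
  using assms Infc_uminus[of c H n] Infc_uminus[of "bd c" A "n - 1"] bd_uminus[of c] Infc_fin[of c H n]
  unfolding Zc_def by auto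

lemma Zc_zero: "(0 :: 'v::linorder set \<Rightarrow> 'g::ab_group_add) \<in> Zc H A n"
  unfolding Zc_def using Infc_zero[of H n] Infc_zero[of A "n - 1"] by simp

lemma rel_hom_inv:
  fixes c :: "'v::linorder set \<Rightarrow> 'g::ab_group_add"
  assumes c: "c \<in> Zc H A n"
  shows "inv\<^bsub>rel_hom H A n\<^esub> (hcls H A n c) = hcls H A n (- c)"
  unfolding m_inv_def
proof (rule the_equality)
  show "hcls H A n (- c) \<in> carrier (rel_hom H A n) \<and>
     hcls H A n c \<otimes>\<^bsub>rel_hom H A n\<^esub> hcls H A n (- c) = \<one>\<^bsub>rel_hom H A n\<^esub> \<and>
     hcls H A n (- c) \<otimes>\<^bsub>rel_hom H A n\<^esub> hcls H A n c = \<one>\<^bsub>rel_hom H A n\<^esub>"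
    using Zc_uminus[OF c] by (simp add: rel_hom_carrier rel_hom_mult rel_hom_one)
next
  fix y assume y: "y \<in> carrier (rel_hom H A n) \<and>
     hcls H A n c \<otimes>\<^bsub>rel_hom H A n\<^esub> y = \<one>\<^bsub>rel_hom H A n\<^esub> \<and>
     y \<otimes>\<^bsub>rel_hom H A n\<^esub> hcls H A n c = \<one>\<^bsub>rel_hom H A n\<^esub>"
  then obtain e where e: "e \<in> Zc H A n" "y = hcls H A n e" unfolding rel_hom_carrier by blast
  hence "hcls H A n (c + e) = hcls H A n 0" using y by (simp add: rel_hom_mult rel_hom_one)
  hence "c + e \<in> Bc H A n" using hcls_eq_iff[of H A n "c + e" 0] by simp
  hence "e - (- c) \<in> Bc H A n" by (simp add: algebra_simps)
  thus "y = hcls H A n (- c)" using e hcls_eq_iff[of H A n e "- c"] by blast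
qed


lemma Zc_mono: "H \<subseteq> L \<Longrightarrow> A \<subseteq> C \<Longrightarrow> Zc H A n \<subseteq> Zc L C n"
  unfolding Zc_def using Infc_mono by blast

lemma fin_chain_diff: fixes c d :: "'v set \<Rightarrow> 'g::ab_group_add"
  shows "fin_chain c \<Longrightarrow> fin_chain d \<Longrightarrow> fin_chain (c - d)"
  using fin_chain_add[of c "- d"] fin_chain_uminus[of d] by (simp only: diff_conv_add_uminus)

lemma DirProd_simps:
  "carrier (G \<times>\<times> K) = carrier G \<times> carrier K"
  "(a, b) \<otimes>\<^bsub>G \<times>\<times> K\<^esub> (c, d) = (a \<otimes>\<^bsub>G\<^esub> c, b \<otimes>\<^bsub>K\<^esub> d)"
  "\<one>\<^bsub>G \<times>\<times> K\<^esub> = (\<one>\<^bsub>G\<^esub>, \<one>\<^bsub>K\<^esub>)"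
  by (simp_all add: DirProd_def)

locale mvctx =
  fixes H A H' A' :: "'v::linorder set set"
  assumes AH: "A \<subseteq> H" and AH': "A' \<subseteq> H'"
    and cH: "\<forall>\<sigma>\<in>H. \<forall>\<sigma>'\<in>H'. \<sigma> \<inter> \<sigma>' = {} \<or> \<sigma> \<inter> \<sigma>' \<in> H \<inter> H'"
    and cA: "\<forall>\<tau>\<in>A. \<forall>\<tau>'\<in>A'. \<tau> \<inter> \<tau>' = {} \<or> \<tau> \<inter> \<tau>' \<in> A \<inter> A'"
begin

definition Dat :: "int \<Rightarrow> ('v set \<Rightarrow> 'g::ab_group_add) \<Rightarrow> ('v set \<Rightarrow> 'g) \<Rightarrow> bool" where
  "Dat n z w \<longleftrightarrow> (\<exists>x y a a'. x \<in> Infc H n \<and> y \<in> Infc H' n \<and> a \<in> Infc A (n - 1) \<and>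
      a' \<in> Infc A' (n - 1) \<and> z = x + y \<and> bd z = a + a' \<and> w = bd x - a)"

definition dlt :: "int \<Rightarrow> ('v set \<Rightarrow> 'g::ab_group_add) set set \<Rightarrow> ('v set \<Rightarrow> 'g) set set" where
  "dlt n Q = hcls (H \<inter> H') (A \<inter> A') (n - 1) (SOME w. \<exists>z. z \<in> \<Union>Q \<and> Dat n z w)"

lemma IA: "Infc A m \<subseteq> Infc H m" using Infc_mono[OF AH] .
lemma IA': "Infc A' m \<subseteq> Infc H' m" using Infc_mono[OF AH'] .

lemma Dat_ex:
  fixes z :: "'v set \<Rightarrow> 'g::ab_group_add"
  assumes z: "z \<in> Zc (H \<union> H') (A \<union> A') n" shows "\<exists>w. Dat n z w"
proof -
  have z1: "z \<in> Infc (H \<union> H') n" and z2: "bd z \<in> Infc (A \<union> A') (n - 1)" using z by (auto simp: Zc_def)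
  obtain x y where xy: "x \<in> Infc H n" "y \<in> Infc H' n" "z = x + y" using Infc_split[OF cH z1] by blast
  obtain a a' where aa: "a \<in> Infc A (n - 1)" "a' \<in> Infc A' (n - 1)" "bd z = a + a'"
    using Infc_split[OF cA z2] by blast
  show ?thesis unfolding Dat_def using xy aa by blast
qed

lemma Dat_Z:
  fixes z w :: "'v set \<Rightarrow> 'g::ab_group_add"
  assumes "Dat n z w" shows "w \<in> Zc (H \<inter> H') (A \<inter> A') (n - 1)"
proof -
  obtain x y a a' where d: "x \<in> Infc H n" "y \<in> Infc H' n" "a \<in> Infc A (n - 1)" "a' \<in> Infc A' (n - 1)"
    "z = x + y" "bd z = a + a'" "w = bd x - a" using assms unfolding Dat_def by blast
  have fx: "fin_chain x" "fin_chain y" "fin_chain a" "fin_chain a'"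
    using Infc_fin d(1-4) by blast+
  have fbx: "fin_chain (bd x)" "fin_chain (bd y)" using fin_chain_bd fx by blast+
  have bz: "bd z = bd x + bd y" using d(5) bd_add[OF fx(1,2)] by simp
  have "bd x + bd y = a + a'" using d(6) bz by simp
  hence "bd y = a + a' - bd x" by (metis add_diff_cancel_left')
  hence w2: "w = a' - bd y" unfolding d(7) by (simp add: algebra_simps)
  have aH: "a \<in> Infc H (n - 1)" using d(3) IA by blast
  have aH': "a' \<in> Infc H' (n - 1)" using d(4) IA' by blast
  have w1: "w \<in> Infc H (n - 1)" using d(7) Infc_diff[OF Infc_bd[OF d(1)] aH] by simp
  have w2': "w \<in> Infc H' (n - 1)" using w2 Infc_diff[OF aH' Infc_bd[OF d(2)]] by simp
  have bw1: "bd w = - bd a" using d(7) bd_diff[OF fbx(1) fx(3)] bd_bd[OF fx(1)] by simp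
  have bw2: "bd w = bd a'" using w2 bd_diff[OF fx(4) fbx(2)] bd_bd[OF fx(2)] by simp
  have "bd w \<in> Infc A (n - 1 - 1)" using bw1 Infc_uminus[OF Infc_bd[OF d(3)]] by simp
  moreover have "bd w \<in> Infc A' (n - 1 - 1)" using bw2 Infc_bd[OF d(4)] by simp
  ultimately show ?thesis using w1 w2' unfolding Zc_def Infc_Int by blast
qed

lemma Dat_wd:
  fixes z1 z2 w1 w2 :: "'v set \<Rightarrow> 'g::ab_group_add"
  assumes D1: "Dat n z1 w1" and D2: "Dat n z2 w2" and zz: "z1 - z2 \<in> Bc (H \<union> H') (A \<union> A') n"
  shows "w1 - w2 \<in> Bc (H \<inter> H') (A \<inter> A') (n - 1)"
proof -
  obtain x1 y1 a1 a1' where d1: "x1 \<in> Infc H n" "y1 \<in> Infc H' n" "a1 \<in> Infc A (n - 1)" "a1' \<in> Infc A' (n - 1)"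
    "z1 = x1 + y1" "bd z1 = a1 + a1'" "w1 = bd x1 - a1" using D1 unfolding Dat_def by blast
  obtain x2 y2 a2 a2' where d2: "x2 \<in> Infc H n" "y2 \<in> Infc H' n" "a2 \<in> Infc A (n - 1)" "a2' \<in> Infc A' (n - 1)"
    "z2 = x2 + y2" "bd z2 = a2 + a2'" "w2 = bd x2 - a2" using D2 unfolding Dat_def by blast
  obtain j d where jd: "j \<in> Infc (A \<union> A') n" "d \<in> Infc (H \<union> H') (n + 1)" "z1 - z2 = j + bd d"
    using zz unfolding Bc_def by blast
  obtain jA jA' where j: "jA \<in> Infc A n" "jA' \<in> Infc A' n" "j = jA + jA'" using Infc_split[OF cA jd(1)] by blast
  obtain dH dH' where dd: "dH \<in> Infc H (n + 1)" "dH' \<in> Infc H' (n + 1)" "d = dH + dH'"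
    using Infc_split[OF cH jd(2)] by blast
  have f: "fin_chain x1" "fin_chain y1" "fin_chain x2" "fin_chain y2" "fin_chain jA" "fin_chain jA'"
    "fin_chain dH" "fin_chain dH'" "fin_chain a1" "fin_chain a2" "fin_chain a1'" "fin_chain a2'"
    using Infc_fin d1 d2 j dd by blast+
  have fb: "fin_chain (bd dH)" "fin_chain (bd dH')" using fin_chain_bd f by blast+
  have bdd: "bd d = bd dH + bd dH'" using dd(3) bd_add[OF f(7,8)] by simp
  define e where "e = x1 - x2 - jA - bd dH"
  have e2: "e = - (y1 - y2 - jA' - bd dH')"
    using jd(3) d1(5) d2(5) j(3) bdd unfolding e_def by (simp add: algebra_simps)
  have jAH: "jA \<in> Infc H n" using j(1) IA by blast
  have jAH': "jA' \<in> Infc H' n" using j(2) IA' by blast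
  have bdH: "bd dH \<in> Infc H n" using Infc_bd[OF dd(1)] by simp
  have bdH': "bd dH' \<in> Infc H' n" using Infc_bd[OF dd(2)] by simp
  have eH: "e \<in> Infc H n" unfolding e_def
    using Infc_diff[OF Infc_diff[OF Infc_diff[OF d1(1) d2(1)] jAH] bdH] .
  have eH': "e \<in> Infc H' n" unfolding e2
    using Infc_uminus[OF Infc_diff[OF Infc_diff[OF Infc_diff[OF d1(2) d2(2)] jAH'] bdH']] .
  have eI: "e \<in> Infc (H \<inter> H') n" using eH eH' Infc_Int by blast
  have bde: "bd e = bd x1 - bd x2 - bd jA"
    unfolding e_def using f fb bd_bd[OF f(7)]
    by (simp add: bd_diff fin_chain_diff)
  have bde2: "bd e = - (bd y1 - bd y2 - bd jA')"
    unfolding e2 using f fb bd_bd[OF f(8)]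
    by (simp add: bd_diff bd_uminus fin_chain_diff)
  have bz1: "bd x1 + bd y1 = a1 + a1'" using d1(5,6) bd_add[OF f(1,2)] by simp
  have bz2: "bd x2 + bd y2 = a2 + a2'" using d2(5,6) bd_add[OF f(3,4)] by simp
  define k where "k = w1 - w2 - bd e"
  have k1: "k = bd jA - (a1 - a2)" unfolding k_def d1(7) d2(7) bde by (simp add: algebra_simps)
  have "bd y1 = a1 + a1' - bd x1" using bz1 by (metis add_diff_cancel_left')
  hence w1': "w1 = a1' - bd y1" unfolding d1(7) by (simp add: algebra_simps)
  have "bd y2 = a2 + a2' - bd x2" using bz2 by (metis add_diff_cancel_left')
  hence w2': "w2 = a2' - bd y2" unfolding d2(7) by (simp add: algebra_simps)
  have k2: "k = (a1' - a2') - bd jA'" unfolding k_def w1' w2' bde2 by (simp add: algebra_simps)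
  have "k \<in> Infc A (n - 1)" unfolding k1 using Infc_diff[OF Infc_bd[OF j(1)] Infc_diff[OF d1(3) d2(3)]] .
  moreover have "k \<in> Infc A' (n - 1)" unfolding k2 using Infc_diff[OF Infc_diff[OF d1(4) d2(4)] Infc_bd[OF j(2)]] .
  ultimately have kI: "k \<in> Infc (A \<inter> A') (n - 1)" using Infc_Int by blast
  have "w1 - w2 = k + bd e" unfolding k_def by simp
  moreover have "e \<in> Infc (H \<inter> H') (n - 1 + 1)" using eI by simp
  ultimately show ?thesis unfolding Bc_def using kI by blast
qed

lemma dlt_eq:
  fixes z w :: "'v set \<Rightarrow> 'g::ab_group_add"
  assumes D: "Dat n z w"
  shows "dlt n (hcls (H \<union> H') (A \<union> A') n z) = hcls (H \<inter> H') (A \<inter> A') (n - 1) w"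
proof -
  let ?Q = "hcls (H \<union> H') (A \<union> A') n z"
  let ?P = "\<lambda>w'. \<exists>z'. z' \<in> \<Union>?Q \<and> Dat n z' w'"
  have "z \<in> \<Union>?Q" using hcls_Union[of z "H \<union> H'" "A \<union> A'" n z] addsub_zero[OF Bc_addsub[of "H \<union> H'" "A \<union> A'" n]] by simp
  hence "?P w" using D by blast
  hence "?P (SOME w'. ?P w')" using someI[of ?P w] by blast
  then obtain z' where z': "z' \<in> \<Union>?Q" "Dat n z' (SOME w'. ?P w')" by blast
  have "z' - z \<in> Bc (H \<union> H') (A \<union> A') n" using z'(1) hcls_Union[of z' "H \<union> H'" "A \<union> A'" n z] by blast
  hence "(SOME w'. ?P w') - w \<in> Bc (H \<inter> H') (A \<inter> A') (n - 1)" using Dat_wd[OF z'(2) D] by blast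
  thus ?thesis unfolding dlt_def using hcls_eq_iff[of "H \<inter> H'" "A \<inter> A'" "n - 1" "SOME w'. ?P w'" w] by blast
qed

end


lemma Bc_intro: "j \<in> Infc A n \<Longrightarrow> d \<in> Infc H (n + 1) \<Longrightarrow> v = j + bd d \<Longrightarrow> v \<in> Bc H A n"
  unfolding Bc_def by blast

lemma Bc_intro': "j \<in> Infc A (n - 1) \<Longrightarrow> d \<in> Infc H n \<Longrightarrow> v = j + bd d \<Longrightarrow> v \<in> Bc H A (n - 1)"
  using Bc_intro[of j A "n - 1" d H v] by simp

context mvctx
begin

lemma alpha_eq:
  fixes c :: "'v set \<Rightarrow> 'g::ab_group_add"
  shows "mv_alpha H A H' A' n (hcls (H \<inter> H') (A \<inter> A') n c) = (hcls H A n c, hcls H' A' n c)"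
proof -
  have "ind_map H A n (hcls (H \<inter> H') (A \<inter> A') n c) = hcls H A n c"
    by (rule ind_map_hcls) (rule Bc_mono; blast)
  moreover have "ind_map H' A' n (hcls (H \<inter> H') (A \<inter> A') n c) = hcls H' A' n c"
    by (rule ind_map_hcls) (rule Bc_mono; blast)
  ultimately show ?thesis unfolding mv_alpha_def by simp
qed

lemma beta_eq:
  fixes x y :: "'v set \<Rightarrow> 'g::ab_group_add"
  assumes x: "x \<in> Zc H A n" and y: "y \<in> Zc H' A' n"
  shows "mv_beta H A H' A' n (hcls H A n x, hcls H' A' n y) = hcls (H \<union> H') (A \<union> A') n (x - y)"
proof -
  have yU: "y \<in> Zc (H \<union> H') (A \<union> A') n" using y Zc_mono[of H' "H \<union> H'" A' "A \<union> A'" n] by blast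
  have "ind_map (H \<union> H') (A \<union> A') n (hcls H A n x) = hcls (H \<union> H') (A \<union> A') n x"
    by (rule ind_map_hcls) (rule Bc_mono; blast)
  moreover have "ind_map (H \<union> H') (A \<union> A') n (hcls H' A' n y) = hcls (H \<union> H') (A \<union> A') n y"
    by (rule ind_map_hcls) (rule Bc_mono; blast)
  ultimately show ?thesis unfolding mv_beta_def using rel_hom_inv[OF yU] by (simp add: rel_hom_mult)
qed

lemma Dat_add:
  fixes z z' w w' :: "'v set \<Rightarrow> 'g::ab_group_add"
  assumes "Dat n z w" "Dat n z' w'" shows "Dat n (z + z') (w + w')"
proof -
  obtain x y a a' where d: "x \<in> Infc H n" "y \<in> Infc H' n" "a \<in> Infc A (n - 1)" "a' \<in> Infc A' (n - 1)"
    "z = x + y" "bd z = a + a'" "w = bd x - a" using assms(1) unfolding Dat_def by blast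
  obtain x2 y2 b b' where e: "x2 \<in> Infc H n" "y2 \<in> Infc H' n" "b \<in> Infc A (n - 1)" "b' \<in> Infc A' (n - 1)"
    "z' = x2 + y2" "bd z' = b + b'" "w' = bd x2 - b" using assms(2) unfolding Dat_def by blast
  have f: "fin_chain x" "fin_chain y" "fin_chain x2" "fin_chain y2" using Infc_fin d e by blast+
  have fz: "fin_chain z" "fin_chain z'" using d(5) e(5) fin_chain_add f by blast+
  have 1: "bd (z + z') = (a + b) + (a' + b')" using bd_add[OF fz] d(6) e(6) by (simp add: algebra_simps)
  have 2: "w + w' = bd (x + x2) - (a + b)" using bd_add[OF f(1,3)] d(7) e(7) by (simp add: algebra_simps)
  have 3: "z + z' = (x + x2) + (y + y2)" using d(5) e(5) by (simp add: algebra_simps)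
  show ?thesis unfolding Dat_def
    using Infc_add[OF d(1) e(1)] Infc_add[OF d(2) e(2)] Infc_add[OF d(3) e(3)] Infc_add[OF d(4) e(4)] 1 2 3
    by blast
qed

lemma alpha_hom:
  "mv_alpha H A H' A' n \<in> hom (rel_hom (H \<inter> H') (A \<inter> A') n :: ('v set \<Rightarrow> 'g::ab_group_add) set set monoid)
                               (rel_hom H A n \<times>\<times> rel_hom H' A' n)"
proof -
  have ZI: "Zc (H \<inter> H') (A \<inter> A') n \<subseteq> (Zc H A n :: ('v set \<Rightarrow> 'g) set)"
     "Zc (H \<inter> H') (A \<inter> A') n \<subseteq> (Zc H' A' n :: ('v set \<Rightarrow> 'g) set)"
    by (rule Zc_mono; blast)+
  have 1: "mv_alpha H A H' A' n \<in> carrier (rel_hom (H \<inter> H') (A \<inter> A') n :: ('v set \<Rightarrow> 'g) set set monoid)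
               \<rightarrow> carrier (rel_hom H A n \<times>\<times> rel_hom H' A' n)"
  proof (rule funcsetI)
    fix Q assume "Q \<in> carrier (rel_hom (H \<inter> H') (A \<inter> A') n :: ('v set \<Rightarrow> 'g) set set monoid)"
    then obtain c :: "'v set \<Rightarrow> 'g" where c: "c \<in> Zc (H \<inter> H') (A \<inter> A') n" "Q = hcls (H \<inter> H') (A \<inter> A') n c"
      unfolding rel_hom_carrier by blast
    show "mv_alpha H A H' A' n Q \<in> carrier (rel_hom H A n \<times>\<times> rel_hom H' A' n)"
      using c ZI by (auto simp: alpha_eq DirProd_simps rel_hom_carrier)
  qed
  have 2: "\<forall>Q1\<in>carrier (rel_hom (H \<inter> H') (A \<inter> A') n :: ('v set \<Rightarrow> 'g) set set monoid).
           \<forall>Q2\<in>carrier (rel_hom (H \<inter> H') (A \<inter> A') n).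
      mv_alpha H A H' A' n (Q1 \<otimes>\<^bsub>rel_hom (H \<inter> H') (A \<inter> A') n\<^esub> Q2)
      = mv_alpha H A H' A' n Q1 \<otimes>\<^bsub>rel_hom H A n \<times>\<times> rel_hom H' A' n\<^esub> mv_alpha H A H' A' n Q2"
  proof (intro ballI)
    fix Q1 Q2 assume q: "Q1 \<in> carrier (rel_hom (H \<inter> H') (A \<inter> A') n :: ('v set \<Rightarrow> 'g) set set monoid)"
      "Q2 \<in> carrier (rel_hom (H \<inter> H') (A \<inter> A') n :: ('v set \<Rightarrow> 'g) set set monoid)"
    then obtain c1 c2 :: "'v set \<Rightarrow> 'g" where "Q1 = hcls (H \<inter> H') (A \<inter> A') n c1" "Q2 = hcls (H \<inter> H') (A \<inter> A') n c2"
      unfolding rel_hom_carrier by blast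
    thus "mv_alpha H A H' A' n (Q1 \<otimes>\<^bsub>rel_hom (H \<inter> H') (A \<inter> A') n\<^esub> Q2)
      = mv_alpha H A H' A' n Q1 \<otimes>\<^bsub>rel_hom H A n \<times>\<times> rel_hom H' A' n\<^esub> mv_alpha H A H' A' n Q2"
      by (simp add: rel_hom_mult alpha_eq DirProd_simps)
  qed
  show ?thesis unfolding hom_def using 1 2 by blast
qed

end


context mvctx
begin

lemma beta_hom:
  "mv_beta H A H' A' n \<in> hom (rel_hom H A n \<times>\<times> rel_hom H' A' n :: (('v set \<Rightarrow> 'g::ab_group_add) set set \<times> ('v set \<Rightarrow> 'g) set set) monoid)
                              (rel_hom (H \<union> H') (A \<union> A') n)"
proof -
  have ZU: "Zc H A n \<subseteq> (Zc (H \<union> H') (A \<union> A') n :: ('v set \<Rightarrow> 'g) set)"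
     "Zc H' A' n \<subseteq> (Zc (H \<union> H') (A \<union> A') n :: ('v set \<Rightarrow> 'g) set)"
    by (rule Zc_mono; blast)+
  have 1: "mv_beta H A H' A' n \<in> carrier (rel_hom H A n \<times>\<times> rel_hom H' A' n :: (('v set \<Rightarrow> 'g) set set \<times> ('v set \<Rightarrow> 'g) set set) monoid)
               \<rightarrow> carrier (rel_hom (H \<union> H') (A \<union> A') n)"
  proof (rule funcsetI)
    fix p assume "p \<in> carrier (rel_hom H A n \<times>\<times> rel_hom H' A' n :: (('v set \<Rightarrow> 'g) set set \<times> ('v set \<Rightarrow> 'g) set set) monoid)"
    then obtain x y :: "'v set \<Rightarrow> 'g" where xy: "x \<in> Zc H A n" "y \<in> Zc H' A' n" "p = (hcls H A n x, hcls H' A' n y)"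
      unfolding DirProd_simps rel_hom_carrier by blast
    have "x - y \<in> Zc (H \<union> H') (A \<union> A') n"
      using Zc_add[OF _ Zc_uminus, of x "H \<union> H'" "A \<union> A'" n y] xy ZU by auto
    thus "mv_beta H A H' A' n p \<in> carrier (rel_hom (H \<union> H') (A \<union> A') n)"
      using xy(3) beta_eq[OF xy(1) xy(2)] unfolding rel_hom_carrier by auto
  qed
  have 2: "\<forall>p1\<in>carrier (rel_hom H A n \<times>\<times> rel_hom H' A' n :: (('v set \<Rightarrow> 'g) set set \<times> ('v set \<Rightarrow> 'g) set set) monoid).
           \<forall>p2\<in>carrier (rel_hom H A n \<times>\<times> rel_hom H' A' n).
      mv_beta H A H' A' n (p1 \<otimes>\<^bsub>rel_hom H A n \<times>\<times> rel_hom H' A' n\<^esub> p2)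
      = mv_beta H A H' A' n p1 \<otimes>\<^bsub>rel_hom (H \<union> H') (A \<union> A') n\<^esub> mv_beta H A H' A' n p2"
  proof (intro ballI)
    fix p1 p2 assume q: "p1 \<in> carrier (rel_hom H A n \<times>\<times> rel_hom H' A' n :: (('v set \<Rightarrow> 'g) set set \<times> ('v set \<Rightarrow> 'g) set set) monoid)"
      "p2 \<in> carrier (rel_hom H A n \<times>\<times> rel_hom H' A' n :: (('v set \<Rightarrow> 'g) set set \<times> ('v set \<Rightarrow> 'g) set set) monoid)"
    obtain x1 y1 :: "'v set \<Rightarrow> 'g" where 1: "x1 \<in> Zc H A n" "y1 \<in> Zc H' A' n" "p1 = (hcls H A n x1, hcls H' A' n y1)"
      using q(1) unfolding DirProd_simps rel_hom_carrier by blast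
    obtain x2 y2 :: "'v set \<Rightarrow> 'g" where 2: "x2 \<in> Zc H A n" "y2 \<in> Zc H' A' n" "p2 = (hcls H A n x2, hcls H' A' n y2)"
      using q(2) unfolding DirProd_simps rel_hom_carrier by blast
    have "mv_beta H A H' A' n (p1 \<otimes>\<^bsub>rel_hom H A n \<times>\<times> rel_hom H' A' n\<^esub> p2)
        = hcls (H \<union> H') (A \<union> A') n ((x1 + x2) - (y1 + y2))"
      using 1(3) 2(3) beta_eq[OF Zc_add[OF 1(1) 2(1)] Zc_add[OF 1(2) 2(2)]] by (simp add: DirProd_simps rel_hom_mult)
    also have "\<dots> = hcls (H \<union> H') (A \<union> A') n (x1 - y1) \<otimes>\<^bsub>rel_hom (H \<union> H') (A \<union> A') n\<^esub>
                    hcls (H \<union> H') (A \<union> A') n (x2 - y2)"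
      by (simp add: rel_hom_mult algebra_simps)
    also have "\<dots> = mv_beta H A H' A' n p1 \<otimes>\<^bsub>rel_hom (H \<union> H') (A \<union> A') n\<^esub> mv_beta H A H' A' n p2"
      using 1(3) 2(3) beta_eq[OF 1(1) 1(2)] beta_eq[OF 2(1) 2(2)] by simp
    finally show "mv_beta H A H' A' n (p1 \<otimes>\<^bsub>rel_hom H A n \<times>\<times> rel_hom H' A' n\<^esub> p2)
      = mv_beta H A H' A' n p1 \<otimes>\<^bsub>rel_hom (H \<union> H') (A \<union> A') n\<^esub> mv_beta H A H' A' n p2" .
  qed
  show ?thesis unfolding hom_def using 1 2 by blast
qed

lemma dlt_hom:
  "dlt n \<in> hom (rel_hom (H \<union> H') (A \<union> A') n :: ('v set \<Rightarrow> 'g::ab_group_add) set set monoid)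
               (rel_hom (H \<inter> H') (A \<inter> A') (n - 1))"
proof -
  have 1: "dlt n \<in> carrier (rel_hom (H \<union> H') (A \<union> A') n :: ('v set \<Rightarrow> 'g) set set monoid)
               \<rightarrow> carrier (rel_hom (H \<inter> H') (A \<inter> A') (n - 1))"
  proof (rule funcsetI)
    fix Q assume "Q \<in> carrier (rel_hom (H \<union> H') (A \<union> A') n :: ('v set \<Rightarrow> 'g) set set monoid)"
    then obtain z :: "'v set \<Rightarrow> 'g" where z: "z \<in> Zc (H \<union> H') (A \<union> A') n" "Q = hcls (H \<union> H') (A \<union> A') n z"
      unfolding rel_hom_carrier by blast
    obtain w where w: "Dat n z w" using Dat_ex[OF z(1)] by blast
    show "dlt n Q \<in> carrier (rel_hom (H \<inter> H') (A \<inter> A') (n - 1))"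
      using z(2) dlt_eq[OF w] Dat_Z[OF w] by (auto simp: rel_hom_carrier)
  qed
  have 2: "\<forall>Q1\<in>carrier (rel_hom (H \<union> H') (A \<union> A') n :: ('v set \<Rightarrow> 'g) set set monoid).
           \<forall>Q2\<in>carrier (rel_hom (H \<union> H') (A \<union> A') n).
      dlt n (Q1 \<otimes>\<^bsub>rel_hom (H \<union> H') (A \<union> A') n\<^esub> Q2)
      = dlt n Q1 \<otimes>\<^bsub>rel_hom (H \<inter> H') (A \<inter> A') (n - 1)\<^esub> dlt n Q2"
  proof (intro ballI)
    fix Q1 Q2 assume q: "Q1 \<in> carrier (rel_hom (H \<union> H') (A \<union> A') n :: ('v set \<Rightarrow> 'g) set set monoid)"
      "Q2 \<in> carrier (rel_hom (H \<union> H') (A \<union> A') n :: ('v set \<Rightarrow> 'g) set set monoid)"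
    obtain z1 :: "'v set \<Rightarrow> 'g" where z1: "z1 \<in> Zc (H \<union> H') (A \<union> A') n" "Q1 = hcls (H \<union> H') (A \<union> A') n z1"
      using q(1) unfolding rel_hom_carrier by blast
    obtain z2 :: "'v set \<Rightarrow> 'g" where z2: "z2 \<in> Zc (H \<union> H') (A \<union> A') n" "Q2 = hcls (H \<union> H') (A \<union> A') n z2"
      using q(2) unfolding rel_hom_carrier by blast
    obtain w1 where w1: "Dat n z1 w1" using Dat_ex[OF z1(1)] by blast
    obtain w2 where w2: "Dat n z2 w2" using Dat_ex[OF z2(1)] by blast
    show "dlt n (Q1 \<otimes>\<^bsub>rel_hom (H \<union> H') (A \<union> A') n\<^esub> Q2)
      = dlt n Q1 \<otimes>\<^bsub>rel_hom (H \<inter> H') (A \<inter> A') (n - 1)\<^esub> dlt n Q2"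
      using z1(2) z2(2) dlt_eq[OF w1] dlt_eq[OF w2] dlt_eq[OF Dat_add[OF w1 w2]]
      by (simp add: rel_hom_mult)
  qed
  show ?thesis unfolding hom_def using 1 2 by blast
qed

end


context mvctx
begin

lemma ex_alpha:
  "mv_alpha H A H' A' n ` carrier (rel_hom (H \<inter> H') (A \<inter> A') n :: ('v set \<Rightarrow> 'g::ab_group_add) set set monoid)
   = kernel (rel_hom H A n \<times>\<times> rel_hom H' A' n) (rel_hom (H \<union> H') (A \<union> A') n) (mv_beta H A H' A' n)"
proof
  show "mv_alpha H A H' A' n ` carrier (rel_hom (H \<inter> H') (A \<inter> A') n :: ('v set \<Rightarrow> 'g) set set monoid)
   \<subseteq> kernel (rel_hom H A n \<times>\<times> rel_hom H' A' n) (rel_hom (H \<union> H') (A \<union> A') n) (mv_beta H A H' A' n)"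
  proof
    fix p assume "p \<in> mv_alpha H A H' A' n ` carrier (rel_hom (H \<inter> H') (A \<inter> A') n :: ('v set \<Rightarrow> 'g) set set monoid)"
    then obtain c :: "'v set \<Rightarrow> 'g" where c: "c \<in> Zc (H \<inter> H') (A \<inter> A') n"
      "p = mv_alpha H A H' A' n (hcls (H \<inter> H') (A \<inter> A') n c)"
      unfolding rel_hom_carrier by blast
    have p: "p = (hcls H A n c, hcls H' A' n c)" using c(2) alpha_eq by simp
    have c1: "c \<in> Zc H A n" "c \<in> Zc H' A' n" using c(1) Zc_mono[of "H \<inter> H'" H "A \<inter> A'" A n]
      Zc_mono[of "H \<inter> H'" H' "A \<inter> A'" A' n] by blast+
    have "mv_beta H A H' A' n p = hcls (H \<union> H') (A \<union> A') n 0" using p beta_eq[OF c1] by simp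
    thus "p \<in> kernel (rel_hom H A n \<times>\<times> rel_hom H' A' n) (rel_hom (H \<union> H') (A \<union> A') n) (mv_beta H A H' A' n)"
      unfolding kernel_def using p c1 by (auto simp: DirProd_simps rel_hom_carrier rel_hom_one)
  qed
  show "kernel (rel_hom H A n \<times>\<times> rel_hom H' A' n) (rel_hom (H \<union> H') (A \<union> A') n) (mv_beta H A H' A' n)
     \<subseteq> mv_alpha H A H' A' n ` carrier (rel_hom (H \<inter> H') (A \<inter> A') n :: ('v set \<Rightarrow> 'g) set set monoid)"
  proof
    fix p assume "p \<in> kernel (rel_hom H A n \<times>\<times> rel_hom H' A' n :: (('v set \<Rightarrow> 'g) set set \<times> ('v set \<Rightarrow> 'g) set set) monoid)
       (rel_hom (H \<union> H') (A \<union> A') n) (mv_beta H A H' A' n)"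
    hence pc: "p \<in> carrier (rel_hom H A n \<times>\<times> rel_hom H' A' n :: (('v set \<Rightarrow> 'g) set set \<times> ('v set \<Rightarrow> 'g) set set) monoid)"
      and pk: "mv_beta H A H' A' n p = \<one>\<^bsub>rel_hom (H \<union> H') (A \<union> A') n\<^esub>" unfolding kernel_def by auto
    obtain x y :: "'v set \<Rightarrow> 'g" where xy: "x \<in> Zc H A n" "y \<in> Zc H' A' n" "p = (hcls H A n x, hcls H' A' n y)"
      using pc unfolding DirProd_simps rel_hom_carrier by blast
    have "hcls (H \<union> H') (A \<union> A') n (x - y) = hcls (H \<union> H') (A \<union> A') n 0"
      using pk xy(3) beta_eq[OF xy(1,2)] rel_hom_one by simp
    hence "x - y \<in> Bc (H \<union> H') (A \<union> A') n" using hcls_eq_iff[of "H \<union> H'" "A \<union> A'" n "x - y" 0] by simp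
    then obtain j d where jd: "j \<in> Infc (A \<union> A') n" "d \<in> Infc (H \<union> H') (n + 1)" "x - y = j + bd d"
      unfolding Bc_def by blast
    obtain jA jA' where j: "jA \<in> Infc A n" "jA' \<in> Infc A' n" "j = jA + jA'" using Infc_split[OF cA jd(1)] by blast
    obtain dH dH' where dd: "dH \<in> Infc H (n + 1)" "dH' \<in> Infc H' (n + 1)" "d = dH + dH'"
      using Infc_split[OF cH jd(2)] by blast
    have xZ: "x \<in> Infc H n" "bd x \<in> Infc A (n - 1)" using xy(1) unfolding Zc_def by auto
    have yZ: "y \<in> Infc H' n" "bd y \<in> Infc A' (n - 1)" using xy(2) unfolding Zc_def by auto
    have f: "fin_chain x" "fin_chain y" "fin_chain jA" "fin_chain jA'" "fin_chain dH" "fin_chain dH'"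
      using Infc_fin xZ(1) yZ(1) j dd by blast+
    have fb: "fin_chain (bd dH)" "fin_chain (bd dH')" using fin_chain_bd f by blast+
    have bdd: "bd d = bd dH + bd dH'" using dd(3) bd_add[OF f(5,6)] by simp
    have "x = y + (x - y)" by simp
    also have "\<dots> = y + (jA + jA' + (bd dH + bd dH'))" using jd(3) j(3) bdd by simp
    finally have xe: "x = y + (jA + jA' + (bd dH + bd dH'))" .
    define c where "c = x - jA - bd dH"
    have c2: "c = y + jA' + bd dH'" unfolding c_def by (subst xe) (simp add: algebra_simps)
    have jAH: "jA \<in> Infc H n" using j(1) IA by blast
    have jAH': "jA' \<in> Infc H' n" using j(2) IA' by blast
    have bdH: "bd dH \<in> Infc H n" using Infc_bd[OF dd(1)] by simp
    have bdH': "bd dH' \<in> Infc H' n" using Infc_bd[OF dd(2)] by simp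
    have cH: "c \<in> Infc H n" unfolding c_def using Infc_diff[OF Infc_diff[OF xZ(1) jAH] bdH] .
    have cH': "c \<in> Infc H' n" unfolding c2 using Infc_add[OF Infc_add[OF yZ(1) jAH'] bdH'] .
    have bdc1: "bd c = bd x - bd jA" unfolding c_def using f fb bd_bd[OF f(5)]
      by (simp add: bd_diff fin_chain_diff)
    have bdc2: "bd c = bd y + bd jA'" unfolding c2 using f fb bd_bd[OF f(6)]
      by (simp add: bd_add fin_chain_add)
    have "bd c \<in> Infc A (n - 1)" unfolding bdc1 using Infc_diff[OF xZ(2) Infc_bd[OF j(1)]] .
    moreover have "bd c \<in> Infc A' (n - 1)" unfolding bdc2 using Infc_add[OF yZ(2) Infc_bd[OF j(2)]] .
    ultimately have cZ: "c \<in> Zc (H \<inter> H') (A \<inter> A') n" unfolding Zc_def Infc_Int using cH cH' by blast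
    have "x - c = jA + bd dH" unfolding c_def by (simp add: algebra_simps)
    hence "x - c \<in> Bc H A n" using Bc_intro[OF j(1) dd(1)] by blast
    hence h1: "hcls H A n c = hcls H A n x" using hcls_eq_iff[of H A n x c] by simp
    have "y - c = (- jA') + bd (- dH')" unfolding c2 using bd_uminus[OF f(6)] by (simp add: algebra_simps)
    hence "y - c \<in> Bc H' A' n" using Bc_intro[OF Infc_uminus[OF j(2)] Infc_uminus[OF dd(2)]] by blast
    hence h2: "hcls H' A' n c = hcls H' A' n y" using hcls_eq_iff[of H' A' n y c] by simp
    have "p = mv_alpha H A H' A' n (hcls (H \<inter> H') (A \<inter> A') n c)" using xy(3) h1 h2 alpha_eq[of n c] by simp
    moreover have "hcls (H \<inter> H') (A \<inter> A') n c \<in> carrier (rel_hom (H \<inter> H') (A \<inter> A') n)"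
      using cZ unfolding rel_hom_carrier by blast
    ultimately show "p \<in> mv_alpha H A H' A' n ` carrier (rel_hom (H \<inter> H') (A \<inter> A') n :: ('v set \<Rightarrow> 'g) set set monoid)"
      by blast
  qed
qed

end


context mvctx
begin

lemma ex_beta:
  "mv_beta H A H' A' n ` carrier (rel_hom H A n \<times>\<times> rel_hom H' A' n :: (('v set \<Rightarrow> 'g::ab_group_add) set set \<times> ('v set \<Rightarrow> 'g) set set) monoid)
   = kernel (rel_hom (H \<union> H') (A \<union> A') n) (rel_hom (H \<inter> H') (A \<inter> A') (n - 1)) (dlt n)"
proof
  show "mv_beta H A H' A' n ` carrier (rel_hom H A n \<times>\<times> rel_hom H' A' n :: (('v set \<Rightarrow> 'g) set set \<times> ('v set \<Rightarrow> 'g) set set) monoid)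
   \<subseteq> kernel (rel_hom (H \<union> H') (A \<union> A') n) (rel_hom (H \<inter> H') (A \<inter> A') (n - 1)) (dlt n)"
  proof
    fix Q assume "Q \<in> mv_beta H A H' A' n ` carrier (rel_hom H A n \<times>\<times> rel_hom H' A' n :: (('v set \<Rightarrow> 'g) set set \<times> ('v set \<Rightarrow> 'g) set set) monoid)"
    then obtain p where pc: "p \<in> carrier (rel_hom H A n \<times>\<times> rel_hom H' A' n :: (('v set \<Rightarrow> 'g) set set \<times> ('v set \<Rightarrow> 'g) set set) monoid)"
      and Qp: "Q = mv_beta H A H' A' n p" by blast
    obtain x y :: "'v set \<Rightarrow> 'g" where xy: "x \<in> Zc H A n" "y \<in> Zc H' A' n" "p = (hcls H A n x, hcls H' A' n y)"
      using pc unfolding DirProd_simps rel_hom_carrier by blast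
    have Q: "Q = hcls (H \<union> H') (A \<union> A') n (x - y)" using Qp xy(3) beta_eq[OF xy(1,2)] by simp
    have xZ: "x \<in> Infc H n" "bd x \<in> Infc A (n - 1)" using xy(1) unfolding Zc_def by auto
    have yZ: "y \<in> Infc H' n" "bd y \<in> Infc A' (n - 1)" using xy(2) unfolding Zc_def by auto
    have f: "fin_chain x" "fin_chain y" using Infc_fin xZ(1) yZ(1) by blast+
    have "Dat n (x - y) 0" unfolding Dat_def
    proof (intro exI conjI)
      show "x \<in> Infc H n" by (rule xZ(1))
      show "- y \<in> Infc H' n" by (rule Infc_uminus[OF yZ(1)])
      show "bd x \<in> Infc A (n - 1)" by (rule xZ(2))
      show "- bd y \<in> Infc A' (n - 1)" by (rule Infc_uminus[OF yZ(2)])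
      show "x - y = x + - y" by simp
      show "bd (x - y) = bd x + - bd y" using bd_diff[OF f] by simp
      show "0 = bd x - bd x" by simp
    qed
    hence "dlt n Q = hcls (H \<inter> H') (A \<inter> A') (n - 1) 0" unfolding Q by (rule dlt_eq)
    moreover have "x - y \<in> Zc (H \<union> H') (A \<union> A') n"
      using Zc_add[OF _ Zc_uminus, of x "H \<union> H'" "A \<union> A'" n y] xy(1,2)
        Zc_mono[of H "H \<union> H'" A "A \<union> A'" n] Zc_mono[of H' "H \<union> H'" A' "A \<union> A'" n] by auto
    ultimately show "Q \<in> kernel (rel_hom (H \<union> H') (A \<union> A') n) (rel_hom (H \<inter> H') (A \<inter> A') (n - 1)) (dlt n)"
      unfolding kernel_def rel_hom_carrier rel_hom_one Q by blast
  qed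
  show "kernel (rel_hom (H \<union> H') (A \<union> A') n) (rel_hom (H \<inter> H') (A \<inter> A') (n - 1)) (dlt n)
     \<subseteq> mv_beta H A H' A' n ` carrier (rel_hom H A n \<times>\<times> rel_hom H' A' n :: (('v set \<Rightarrow> 'g) set set \<times> ('v set \<Rightarrow> 'g) set set) monoid)"
  proof
    fix Q assume "Q \<in> kernel (rel_hom (H \<union> H') (A \<union> A') n :: ('v set \<Rightarrow> 'g) set set monoid)
        (rel_hom (H \<inter> H') (A \<inter> A') (n - 1)) (dlt n)"
    hence Qc: "Q \<in> carrier (rel_hom (H \<union> H') (A \<union> A') n :: ('v set \<Rightarrow> 'g) set set monoid)"
      and Qk: "dlt n Q = \<one>\<^bsub>rel_hom (H \<inter> H') (A \<inter> A') (n - 1)\<^esub>" unfolding kernel_def by auto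
    obtain z :: "'v set \<Rightarrow> 'g" where z: "z \<in> Zc (H \<union> H') (A \<union> A') n" "Q = hcls (H \<union> H') (A \<union> A') n z"
      using Qc unfolding rel_hom_carrier by blast
    obtain w where D: "Dat n z w" using Dat_ex[OF z(1)] by blast
    have "hcls (H \<inter> H') (A \<inter> A') (n - 1) w = hcls (H \<inter> H') (A \<inter> A') (n - 1) 0"
      using Qk dlt_eq[OF D] z(2) rel_hom_one by simp
    hence "w \<in> Bc (H \<inter> H') (A \<inter> A') (n - 1)" using hcls_eq_iff[of "H \<inter> H'" "A \<inter> A'" "n - 1" w 0] by simp
    then obtain k e where ke: "k \<in> Infc (A \<inter> A') (n - 1)" "e \<in> Infc (H \<inter> H') (n - 1 + 1)" "w = k + bd e"
      unfolding Bc_def by blast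
    have eI: "e \<in> Infc H n" "e \<in> Infc H' n" using ke(2) Infc_Int by auto
    have kI: "k \<in> Infc A (n - 1)" "k \<in> Infc A' (n - 1)" using ke(1) Infc_Int by auto
    obtain x y a a' where d: "x \<in> Infc H n" "y \<in> Infc H' n" "a \<in> Infc A (n - 1)" "a' \<in> Infc A' (n - 1)"
      "z = x + y" "bd z = a + a'" "w = bd x - a" using D unfolding Dat_def by blast
    have f: "fin_chain x" "fin_chain y" "fin_chain e" using Infc_fin d(1,2) eI(1) by blast+
    have bde: "bd e = w - k" using ke(3) by simp
    have bdx: "bd x = w + a" using d(7) by simp
    have "bd x + bd y = a + a'" using d(5,6) bd_add[OF f(1,2)] by simp
    hence bdy: "bd y = a' - w" unfolding bdx by (metis add_diff_cancel_left' diff_add_eq add.commute diff_diff_eq2 add_diff_cancel)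
    define xt where "xt = x - e"
    define yt where "yt = y + e"
    have bxt: "bd xt = a + k" unfolding xt_def using bd_diff[OF f(1,3)] bdx bde by (simp add: algebra_simps)
    have byt: "bd yt = a' - k" unfolding yt_def using bd_add[OF f(2,3)] bdy bde by (simp add: algebra_simps)
    have xtZ: "xt \<in> Zc H A n" unfolding Zc_def using Infc_diff[OF d(1) eI(1)] Infc_add[OF d(3) kI(1)] bxt
      by (simp add: xt_def)
    have ytZ: "yt \<in> Zc H' A' n" unfolding Zc_def using Infc_add[OF d(2) eI(2)] Infc_diff[OF d(4) kI(2)] byt
      by (simp add: yt_def)
    have ytZ': "- yt \<in> Zc H' A' n" by (rule Zc_uminus[OF ytZ])
    have "mv_beta H A H' A' n (hcls H A n xt, hcls H' A' n (- yt)) = hcls (H \<union> H') (A \<union> A') n (xt - - yt)"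
      by (rule beta_eq[OF xtZ ytZ'])
    also have "xt - - yt = z" unfolding xt_def yt_def d(5) by (simp add: algebra_simps)
    finally have eq: "mv_beta H A H' A' n (hcls H A n xt, hcls H' A' n (- yt)) = hcls (H \<union> H') (A \<union> A') n z" .
    have "Q = mv_beta H A H' A' n (hcls H A n xt, hcls H' A' n (- yt))" by (simp only: z(2) eq)
    moreover have "(hcls H A n xt, hcls H' A' n (- yt)) \<in> carrier (rel_hom H A n \<times>\<times> rel_hom H' A' n)"
      using xtZ ytZ' unfolding DirProd_simps rel_hom_carrier by blast
    ultimately show "Q \<in> mv_beta H A H' A' n ` carrier (rel_hom H A n \<times>\<times> rel_hom H' A' n :: (('v set \<Rightarrow> 'g) set set \<times> ('v set \<Rightarrow> 'g) set set) monoid)"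
      by blast
  qed
qed

end


context mvctx
begin

lemma ex_dlt:
  "dlt n ` carrier (rel_hom (H \<union> H') (A \<union> A') n :: ('v set \<Rightarrow> 'g::ab_group_add) set set monoid)
   = kernel (rel_hom (H \<inter> H') (A \<inter> A') (n - 1)) (rel_hom H A (n - 1) \<times>\<times> rel_hom H' A' (n - 1))
            (mv_alpha H A H' A' (n - 1))"
proof
  show "dlt n ` carrier (rel_hom (H \<union> H') (A \<union> A') n :: ('v set \<Rightarrow> 'g) set set monoid)
   \<subseteq> kernel (rel_hom (H \<inter> H') (A \<inter> A') (n - 1)) (rel_hom H A (n - 1) \<times>\<times> rel_hom H' A' (n - 1))
            (mv_alpha H A H' A' (n - 1))"
  proof
    fix Q assume "Q \<in> dlt n ` carrier (rel_hom (H \<union> H') (A \<union> A') n :: ('v set \<Rightarrow> 'g) set set monoid)"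
    then obtain z :: "'v set \<Rightarrow> 'g" where z: "z \<in> Zc (H \<union> H') (A \<union> A') n"
      "Q = dlt n (hcls (H \<union> H') (A \<union> A') n z)" unfolding rel_hom_carrier by blast
    obtain w where D: "Dat n z w" using Dat_ex[OF z(1)] by blast
    have Q: "Q = hcls (H \<inter> H') (A \<inter> A') (n - 1) w" using z(2) dlt_eq[OF D] by simp
    have wZ: "w \<in> Zc (H \<inter> H') (A \<inter> A') (n - 1)" by (rule Dat_Z[OF D])
    obtain x y a a' where d: "x \<in> Infc H n" "y \<in> Infc H' n" "a \<in> Infc A (n - 1)" "a' \<in> Infc A' (n - 1)"
      "z = x + y" "bd z = a + a'" "w = bd x - a" using D unfolding Dat_def by blast
    have f: "fin_chain x" "fin_chain y" using Infc_fin d(1,2) by blast+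
    have bdx: "bd x = w + a" using d(7) by simp
    have "bd x + bd y = a + a'" using d(5,6) bd_add[OF f(1,2)] by simp
    hence bdy: "bd y = a' - w" unfolding bdx by (metis add_diff_cancel_left' diff_add_eq add.commute diff_diff_eq2 add_diff_cancel)
    have "w - 0 \<in> Bc H A (n - 1)"
      using Bc_intro'[OF Infc_uminus[OF d(3)] d(1)] d(7) by (simp add: algebra_simps)
    hence h1: "hcls H A (n - 1) w = hcls H A (n - 1) 0" using hcls_eq_iff[of H A "n - 1" w 0] by blast
    have "w - 0 \<in> Bc H' A' (n - 1)"
      using Bc_intro'[OF d(4) Infc_uminus[OF d(2)]] bdy bd_uminus[OF f(2)] by (simp add: algebra_simps)
    hence h2: "hcls H' A' (n - 1) w = hcls H' A' (n - 1) 0" using hcls_eq_iff[of H' A' "n - 1" w 0] by blast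
    have "mv_alpha H A H' A' (n - 1) Q = (hcls H A (n - 1) 0, hcls H' A' (n - 1) 0)"
      unfolding Q alpha_eq[of "n - 1" w] h1 h2 ..
    thus "Q \<in> kernel (rel_hom (H \<inter> H') (A \<inter> A') (n - 1)) (rel_hom H A (n - 1) \<times>\<times> rel_hom H' A' (n - 1))
            (mv_alpha H A H' A' (n - 1))"
      unfolding kernel_def DirProd_simps rel_hom_one rel_hom_carrier Q using wZ by blast
  qed
  show "kernel (rel_hom (H \<inter> H') (A \<inter> A') (n - 1)) (rel_hom H A (n - 1) \<times>\<times> rel_hom H' A' (n - 1))
            (mv_alpha H A H' A' (n - 1))
      \<subseteq> dlt n ` carrier (rel_hom (H \<union> H') (A \<union> A') n :: ('v set \<Rightarrow> 'g) set set monoid)"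
  proof
    fix Q assume "Q \<in> kernel (rel_hom (H \<inter> H') (A \<inter> A') (n - 1) :: ('v set \<Rightarrow> 'g) set set monoid)
       (rel_hom H A (n - 1) \<times>\<times> rel_hom H' A' (n - 1)) (mv_alpha H A H' A' (n - 1))"
    hence Qc: "Q \<in> carrier (rel_hom (H \<inter> H') (A \<inter> A') (n - 1) :: ('v set \<Rightarrow> 'g) set set monoid)"
      and Qk: "mv_alpha H A H' A' (n - 1) Q = \<one>\<^bsub>rel_hom H A (n - 1) \<times>\<times> rel_hom H' A' (n - 1)\<^esub>"
      unfolding kernel_def by auto
    obtain c :: "'v set \<Rightarrow> 'g" where c: "c \<in> Zc (H \<inter> H') (A \<inter> A') (n - 1)" "Q = hcls (H \<inter> H') (A \<inter> A') (n - 1) c"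
      using Qc unfolding rel_hom_carrier by blast
    have "(hcls H A (n - 1) c, hcls H' A' (n - 1) c) = (hcls H A (n - 1) 0, hcls H' A' (n - 1) 0)"
      using Qk c(2) alpha_eq[of "n - 1" c] by (simp add: DirProd_simps rel_hom_one)
    hence "c \<in> Bc H A (n - 1)" "c \<in> Bc H' A' (n - 1)"
      using hcls_eq_iff[of H A "n - 1" c 0] hcls_eq_iff[of H' A' "n - 1" c 0] by auto
    then obtain j1 d1 j2 d2 where jd: "j1 \<in> Infc A (n - 1)" "d1 \<in> Infc H (n - 1 + 1)" "c = j1 + bd d1"
      "j2 \<in> Infc A' (n - 1)" "d2 \<in> Infc H' (n - 1 + 1)" "c = j2 + bd d2"
      unfolding Bc_def by blast
    have dn: "d1 \<in> Infc H n" "d2 \<in> Infc H' n" using jd(2,5) by simp_all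
    have f: "fin_chain d1" "fin_chain d2" using Infc_fin dn by blast+
    define z where "z = d1 - d2"
    have zU: "z \<in> Infc (H \<union> H') n" unfolding z_def
      using Infc_diff[of d1 "H \<union> H'" n d2] dn Infc_mono[of H "H \<union> H'" n] Infc_mono[of H' "H \<union> H'" n] by blast
    have e1: "bd d1 = c - j1" using jd(3) by simp
    have e2: "bd d2 = c - j2" using jd(6) by simp
    have bdz: "bd z = - j1 + j2" unfolding z_def bd_diff[OF f] e1 e2 by (simp add: algebra_simps)
    have "bd z \<in> Infc (A \<union> A') (n - 1)" unfolding bdz
      using Infc_add[of "- j1" "A \<union> A'" "n - 1" j2] Infc_uminus[OF jd(1)] jd(4)
        Infc_mono[of A "A \<union> A'" "n - 1"] Infc_mono[of A' "A \<union> A'" "n - 1"] by blast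
    hence zZ: "z \<in> Zc (H \<union> H') (A \<union> A') n" unfolding Zc_def using zU by blast
    have "Dat n z c" unfolding Dat_def
    proof (intro exI conjI)
      show "d1 \<in> Infc H n" by (rule dn(1))
      show "- d2 \<in> Infc H' n" by (rule Infc_uminus[OF dn(2)])
      show "- j1 \<in> Infc A (n - 1)" by (rule Infc_uminus[OF jd(1)])
      show "j2 \<in> Infc A' (n - 1)" by (rule jd(4))
      show "z = d1 + - d2" unfolding z_def by simp
      show "bd z = - j1 + j2" by (rule bdz)
      show "c = bd d1 - - j1" using jd(3) by (simp add: algebra_simps)
    qed
    hence "dlt n (hcls (H \<union> H') (A \<union> A') n z) = Q" using dlt_eq c(2) by simp
    moreover have "hcls (H \<union> H') (A \<union> A') n z \<in> carrier (rel_hom (H \<union> H') (A \<union> A') n)"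
      using zZ unfolding rel_hom_carrier by blast
    ultimately show "Q \<in> dlt n ` carrier (rel_hom (H \<union> H') (A \<union> A') n :: ('v set \<Rightarrow> 'g) set set monoid)"
      by blast
  qed
qed

end

theorem theorem3p888:
  fixes H A H' A' :: "'v::linorder set set"
  assumes "hypergraph H" and "A \<subseteq> H"
      and "hypergraph H'" and "A' \<subseteq> H'"
      and "\<forall>\<sigma>\<in>H. \<forall>\<sigma>'\<in>H'. \<sigma> \<inter> \<sigma>' = {} \<or> \<sigma> \<inter> \<sigma>' \<in> H \<inter> H'"
      and "\<forall>\<tau>\<in>A. \<forall>\<tau>'\<in>A'. \<tau> \<inter> \<tau>' = {} \<or> \<tau> \<inter> \<tau>' \<in> A \<inter> A'"
  shows "\<exists>\<delta> :: int \<Rightarrow> ('v set \<Rightarrow> 'g::ab_group_add) set set \<Rightarrow> ('v set \<Rightarrow> 'g) set set.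
    \<forall>n::int.
      mv_alpha H A H' A' n \<in> hom (rel_hom (H \<inter> H') (A \<inter> A') n)
                                   (rel_hom H A n \<times>\<times> rel_hom H' A' n) \<and>
      mv_beta H A H' A' n \<in> hom (rel_hom H A n \<times>\<times> rel_hom H' A' n)
                                  (rel_hom (H \<union> H') (A \<union> A') n) \<and>
      \<delta> n \<in> hom (rel_hom (H \<union> H') (A \<union> A') n) (rel_hom (H \<inter> H') (A \<inter> A') (n - 1)) \<and>
      mv_alpha H A H' A' n ` carrier (rel_hom (H \<inter> H') (A \<inter> A') n)
        = kernel (rel_hom H A n \<times>\<times> rel_hom H' A' n) (rel_hom (H \<union> H') (A \<union> A') n)
                 (mv_beta H A H' A' n) \<and>
      mv_beta H A H' A' n ` carrier (rel_hom H A n \<times>\<times> rel_hom H' A' n)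
        = kernel (rel_hom (H \<union> H') (A \<union> A') n) (rel_hom (H \<inter> H') (A \<inter> A') (n - 1)) (\<delta> n) \<and>
      \<delta> n ` carrier (rel_hom (H \<union> H') (A \<union> A') n)
        = kernel (rel_hom (H \<inter> H') (A \<inter> A') (n - 1))
                 (rel_hom H A (n - 1) \<times>\<times> rel_hom H' A' (n - 1)) (mv_alpha H A H' A' (n - 1))"
proof -
  interpret mvctx H A H' A' using assms(2,4,5,6) by unfold_locales
  show ?thesis
    by (rule exI[of _ dlt]) (intro allI conjI alpha_hom beta_hom dlt_hom ex_alpha ex_beta ex_dlt)
qed

end
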